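(* Let $\mathcal{F}=(f_s:I_s\to[n]\mid s\in S)$ be an $S$-claw in $\Delta$. The image of $\mathcal{F}$ under the canonical functor $\Delta\to\Lambda$ is strongly biCartesian in $\Lambda$ (i.e. it extends to a strongly Cartesian $S$-cube in $\Lambda$, and this cube is also strongly coCartesian) if and only if $\mathcal{F}$ is cyclically compatible.
   Context: $\Delta$: simplex category of nonempty finite linear orders $[n]=\{0<\dots<n\}$, weakly monotone maps. $\Lambda$: Connes' cyclic category (objects the cyclic sets $\langle n\rangle=(\mathbb{Z}/(n+1),+1)$); the canonical functor $\Delta\to\Lambda$, $[n]\mapsto\langle n\rangle$, identifies $\Delta$ with the slice $\Lambda_{/\langle0\rangle}$ and is the forgetful functor. An $S$-cube is a functor $\mathcal{P}(S)^{\mathrm{op}}\to\mathcal{D}$ from the opposite of the subset poset of $S$; it is strongly Cartesian / strongly coCartesian if all squares $Q(T\cup\{s,s'\})\to Q(T\cup\{s\}),Q(T\cup\{s'\})\to Q(T)$ ($s\ne s'\notin T$) are pullbacks / pushouts. An $S$-claw on $[n]$ is a family of morphisms $f_s:I_s\to[n]$. It is compatible if (BC1) for each $i\in[n]$ at most one $s$ has $f_s^{-1}\{i\}$ not a singleton, and (BC2) for each $0<i\le n$ at most one $s$ has $\{i-1,i\}\not\subseteq f_s(I_s)$. It is cyclically compatible if it is compatible and all but at most one $s\in S$ satisfy $\{0,n\}\subseteq f_s(I_s)$. *)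

theory Defs
  imports Main
begin

text \<open>A morphism [m] \<rightarrow> [n] in \<Delta>: a weakly monotone map {0..m} \<rightarrow> {0..n},
  represented by a function nat \<Rightarrow> nat (values outside {0..m} are irrelevant).\<close>
definition delta_mor :: "nat \<Rightarrow> nat \<Rightarrow> (nat \<Rightarrow> nat) \<Rightarrow> bool" where
  "delta_mor m n g \<longleftrightarrow> (\<forall>i\<le>m. g i \<le> n) \<and> (\<forall>i j. i \<le> j \<and> j \<le> m \<longrightarrow> g i \<le> g j)"

text \<open>Objects: natural numbers n (standing for \<langle>n\<rangle> = Z/(n+1)).
  A morphism \<langle>m\<rangle> \<rightarrow> \<langle>n\<rangle> is a weakly monotone map F : Z \<rightarrow> Z with
  F (i + m + 1) = F i + n + 1, taken modulo translation by multiples of n+1;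
  we use the normal form 0 \<le> F 0 \<le> n as unique representative.\<close>
definition lam_hom :: "nat \<Rightarrow> nat \<Rightarrow> (int \<Rightarrow> int) set" where
  "lam_hom m n = {F. mono F \<and> (\<forall>i. F (i + int m + 1) = F i + int n + 1)
                       \<and> 0 \<le> F 0 \<and> F 0 \<le> int n}"

definition lam_comp :: "nat \<Rightarrow> (int \<Rightarrow> int) \<Rightarrow> (int \<Rightarrow> int) \<Rightarrow> (int \<Rightarrow> int)" where
  "lam_comp p G F = (\<lambda>i. G (F i) - (int p + 1) * (G (F 0) div (int p + 1)))"

definition delta_to_lambda :: "nat \<Rightarrow> nat \<Rightarrow> (nat \<Rightarrow> nat) \<Rightarrow> (int \<Rightarrow> int)" where
  "delta_to_lambda m n g =
     (\<lambda>i. int (g (nat (i mod (int m + 1)))) + (int n + 1) * (i div (int m + 1)))"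

definition lam_pullback ::
  "nat \<Rightarrow> nat \<Rightarrow> nat \<Rightarrow> nat \<Rightarrow> (int \<Rightarrow> int) \<Rightarrow> (int \<Rightarrow> int) \<Rightarrow> (int \<Rightarrow> int) \<Rightarrow> (int \<Rightarrow> int) \<Rightarrow> bool" where
  "lam_pullback P A B C pa pb ca cb \<longleftrightarrow>
     pa \<in> lam_hom P A \<and> pb \<in> lam_hom P B \<and> ca \<in> lam_hom A C \<and> cb \<in> lam_hom B C \<and>
     lam_comp C ca pa = lam_comp C cb pb \<and>
     (\<forall>X x y. x \<in> lam_hom X A \<longrightarrow> y \<in> lam_hom X B \<longrightarrow> lam_comp C ca x = lam_comp C cb y \<longrightarrow>
        (\<exists>!u. u \<in> lam_hom X P \<and> lam_comp A pa u = x \<and> lam_comp B pb u = y))"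

definition lam_pushout ::
  "nat \<Rightarrow> nat \<Rightarrow> nat \<Rightarrow> nat \<Rightarrow> (int \<Rightarrow> int) \<Rightarrow> (int \<Rightarrow> int) \<Rightarrow> (int \<Rightarrow> int) \<Rightarrow> (int \<Rightarrow> int) \<Rightarrow> bool" where
  "lam_pushout P A B C pa pb ca cb \<longleftrightarrow>
     pa \<in> lam_hom P A \<and> pb \<in> lam_hom P B \<and> ca \<in> lam_hom A C \<and> cb \<in> lam_hom B C \<and>
     lam_comp C ca pa = lam_comp C cb pb \<and>
     (\<forall>X x y. x \<in> lam_hom A X \<longrightarrow> y \<in> lam_hom B X \<longrightarrow> lam_comp X x pa = lam_comp X y pb \<longrightarrow>
        (\<exists>!u. u \<in> lam_hom C X \<and> lam_comp X u ca = x \<and> lam_comp X u cb = y))"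

text \<open>An S-cube Q : P(S)^op \<rightarrow> \<Lambda>: objects Qo T, and for T \<subseteq> T' \<subseteq> S a morphism
  Qm T T' : Qo T' \<rightarrow> Qo T, functorially.\<close>
definition lam_cube :: "'s set \<Rightarrow> ('s set \<Rightarrow> nat) \<Rightarrow> ('s set \<Rightarrow> 's set \<Rightarrow> (int \<Rightarrow> int)) \<Rightarrow> bool" where
  "lam_cube S Qo Qm \<longleftrightarrow>
     (\<forall>T T'. T \<subseteq> T' \<and> T' \<subseteq> S \<longrightarrow> Qm T T' \<in> lam_hom (Qo T') (Qo T)) \<and>
     (\<forall>T. T \<subseteq> S \<longrightarrow> Qm T T = id) \<and>
     (\<forall>T T' T''. T \<subseteq> T' \<and> T' \<subseteq> T'' \<and> T'' \<subseteq> S \<longrightarrow>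
        Qm T T'' = lam_comp (Qo T) (Qm T T') (Qm T' T''))"

definition strongly_cartesian :: "'s set \<Rightarrow> ('s set \<Rightarrow> nat) \<Rightarrow> ('s set \<Rightarrow> 's set \<Rightarrow> (int \<Rightarrow> int)) \<Rightarrow> bool" where
  "strongly_cartesian S Qo Qm \<longleftrightarrow>
     (\<forall>T s s'. T \<subseteq> S \<and> s \<in> S \<and> s' \<in> S \<and> s \<noteq> s' \<and> s \<notin> T \<and> s' \<notin> T \<longrightarrow>
        lam_pullback (Qo (insert s (insert s' T))) (Qo (insert s T)) (Qo (insert s' T)) (Qo T)
          (Qm (insert s T) (insert s (insert s' T))) (Qm (insert s' T) (insert s (insert s' T)))
          (Qm T (insert s T)) (Qm T (insert s' T)))"

definition strongly_cocartesian :: "'s set \<Rightarrow> ('s set \<Rightarrow> nat) \<Rightarrow> ('s set \<Rightarrow> 's set \<Rightarrow> (int \<Rightarrow> int)) \<Rightarrow> bool" where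
  "strongly_cocartesian S Qo Qm \<longleftrightarrow>
     (\<forall>T s s'. T \<subseteq> S \<and> s \<in> S \<and> s' \<in> S \<and> s \<noteq> s' \<and> s \<notin> T \<and> s' \<notin> T \<longrightarrow>
        lam_pushout (Qo (insert s (insert s' T))) (Qo (insert s T)) (Qo (insert s' T)) (Qo T)
          (Qm (insert s T) (insert s (insert s' T))) (Qm (insert s' T) (insert s (insert s' T)))
          (Qm T (insert s T)) (Qm T (insert s' T)))"

definition extends_claw ::
  "'s set \<Rightarrow> nat \<Rightarrow> ('s \<Rightarrow> nat) \<Rightarrow> ('s \<Rightarrow> nat \<Rightarrow> nat) \<Rightarrow>
   ('s set \<Rightarrow> nat) \<Rightarrow> ('s set \<Rightarrow> 's set \<Rightarrow> (int \<Rightarrow> int)) \<Rightarrow> bool" where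
  "extends_claw S n m f Qo Qm \<longleftrightarrow>
     lam_cube S Qo Qm \<and> Qo {} = n \<and>
     (\<forall>s\<in>S. Qo {s} = m s \<and> Qm {} {s} = delta_to_lambda (m s) n (f s))"

definition compatible :: "'s set \<Rightarrow> nat \<Rightarrow> ('s \<Rightarrow> nat) \<Rightarrow> ('s \<Rightarrow> nat \<Rightarrow> nat) \<Rightarrow> bool" where
  "compatible S n m f \<longleftrightarrow>
     (\<forall>i\<le>n. card {s\<in>S. card {j. j \<le> m s \<and> f s j = i} \<noteq> 1} \<le> 1) \<and>
     (\<forall>i. 0 < i \<and> i \<le> n \<longrightarrow> card {s\<in>S. \<not> {i - 1, i} \<subseteq> f s ` {0..m s}} \<le> 1)"

definition cyclically_compatible :: "'s set \<Rightarrow> nat \<Rightarrow> ('s \<Rightarrow> nat) \<Rightarrow> ('s \<Rightarrow> nat \<Rightarrow> nat) \<Rightarrow> bool" where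
  "cyclically_compatible S n m f \<longleftrightarrow>
     compatible S n m f \<and> card {s\<in>S. \<not> {0, n} \<subseteq> f s ` {0..m s}} \<le> 1"

end

theory Submission
  imports Defs
begin

definition emap :: "nat \<Rightarrow> nat \<Rightarrow> (int \<Rightarrow> int) \<Rightarrow> bool" where
  "emap a b F \<longleftrightarrow> mono F \<and> (\<forall>i. F (i + int a + 1) = F i + int b + 1)"

definition sh :: "nat \<Rightarrow> int \<Rightarrow> (int \<Rightarrow> int) \<Rightarrow> int \<Rightarrow> int" where
  "sh b k F = (\<lambda>i. F i + k * (int b + 1))"

definition nrm :: "nat \<Rightarrow> (int \<Rightarrow> int) \<Rightarrow> int \<Rightarrow> int" where
  "nrm b F = sh b (- (F 0 div (int b + 1))) F"

lemma sh_apply[simp]: "sh b k F i = F i + k * (int b + 1)"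
  by (simp add: sh_def)

lemma lam_hom_iff: "F \<in> lam_hom a b \<longleftrightarrow> emap a b F \<and> 0 \<le> F 0 \<and> F 0 \<le> int b"
  by (auto simp: lam_hom_def emap_def)

lemma lam_comp_nrm: "lam_comp p G F = nrm p (G \<circ> F)"
  by (simp add: lam_comp_def nrm_def sh_def fun_eq_iff algebra_simps)

lemma emap_mono: "emap a b F \<Longrightarrow> i \<le> j \<Longrightarrow> F i \<le> F j"
  by (auto simp: emap_def mono_def)

lemma emap_step: "emap a b F \<Longrightarrow> F (i + int a + 1) = F i + int b + 1"
  by (auto simp: emap_def)

lemma emap_shift_nat: "emap a b F \<Longrightarrow> F (i + int k * (int a + 1)) = F i + int k * (int b + 1)"
proof (induction k arbitrary: i)
  case 0 then show ?case by simp
next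
  case (Suc k)
  have "F (i + int (Suc k) * (int a + 1)) = F ((i + int k * (int a + 1)) + int a + 1)"
    by (simp add: algebra_simps)
  also have "\<dots> = F (i + int k * (int a + 1)) + int b + 1" using emap_step[OF Suc.prems] by simp
  also have "\<dots> = F i + int (Suc k) * (int b + 1)" using Suc by (simp add: algebra_simps)
  finally show ?case .
qed

lemma emap_shift: assumes e: "emap a b F" shows "F (i + k * (int a + 1)) = F i + k * (int b + 1)"
proof (cases "k \<ge> 0")
  case True
  then obtain k' where kk: "k = int k'" using nonneg_int_cases by blast
  show ?thesis unfolding kk by (rule emap_shift_nat[OF e])
next
  case False
  then have "0 \<le> - k" by simp
  then obtain k' where k': "- k = int k'" using nonneg_int_cases by blast
  then have k: "k = - int k'" by simp
  have "i = (i + k * (int a + 1)) + int k' * (int a + 1)" unfolding k by (simp add: algebra_simps)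
  then have "F i = F ((i + k * (int a + 1)) + int k' * (int a + 1))" by (rule arg_cong)
  also have "\<dots> = F (i + k * (int a + 1)) + int k' * (int b + 1)" by (rule emap_shift_nat[OF e])
  finally show ?thesis unfolding k by (simp add: algebra_simps)
qed

lemma emap_comp: "emap a b F \<Longrightarrow> emap b c G \<Longrightarrow> emap a c (G \<circ> F)"
  unfolding emap_def mono_def by (auto simp: add.assoc)

lemma emap_sh: "emap a b F \<Longrightarrow> emap a b (sh b k F)"
  unfolding emap_def mono_def by (auto simp: algebra_simps)

lemma comp_sh_right: "emap b c G \<Longrightarrow> G \<circ> sh b k F = sh c k (G \<circ> F)"
  using emap_shift[of b c G] by (simp add: fun_eq_iff)

lemma sh_comp_left: "sh b k F \<circ> H = sh b k (F \<circ> H)"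
  by (simp add: fun_eq_iff)

lemma sh_sh[simp]: "sh b k (sh b l F) = sh b (k + l) F"
  by (simp add: fun_eq_iff algebra_simps)

lemma sh_0[simp]: "sh b 0 F = F"
  by (simp add: fun_eq_iff)

lemma sh_eq_cancel: "sh b k F = sh b l F \<Longrightarrow> k = l"
proof -
  assume "sh b k F = sh b l F"
  then have "F 0 + k * (int b + 1) = F 0 + l * (int b + 1)" by (metis sh_apply)
  then show "k = l" by simp
qed

lemma sh_self: "F = sh b k F \<Longrightarrow> k = 0"
  using sh_eq_cancel[of b 0 F k] by simp

lemma nrm_sh[simp]: "nrm b (sh b k F) = nrm b F"
proof -
  have d: "(F 0 + k * (int b + 1)) div (int b + 1) = F 0 div (int b + 1) + k" by simp
  have "nrm b (sh b k F) = sh b (- ((F 0 + k * (int b + 1)) div (int b + 1))) (sh b k F)"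
    by (simp add: nrm_def)
  also have "\<dots> = nrm b F" unfolding d nrm_def by (simp add: fun_eq_iff algebra_simps)
  finally show ?thesis .
qed

lemma nrm_is_sh: "nrm b F = sh b (- (F 0 div (int b + 1))) F"
  by (simp add: nrm_def)

lemma sh_nrm: "F = sh b (F 0 div (int b + 1)) (nrm b F)"
  by (simp add: nrm_def)

lemma nrm_lam: "emap a b F \<Longrightarrow> nrm b F \<in> lam_hom a b"
proof -
  assume e: "emap a b F"
  have "0 \<le> F 0 - (F 0 div (int b + 1)) * (int b + 1)"
    "F 0 - (F 0 div (int b + 1)) * (int b + 1) \<le> int b"
    using pos_mod_sign[of "int b + 1" "F 0"] pos_mod_bound[of "int b + 1" "F 0"]
    by (simp_all add: minus_div_mult_eq_mod)
  then show ?thesis using emap_sh[OF e] by (simp add: lam_hom_iff nrm_def)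
qed

lemma nrm_id: "F \<in> lam_hom a b \<Longrightarrow> nrm b F = F"
proof -
  assume "F \<in> lam_hom a b"
  then have "0 \<le> F 0" "F 0 \<le> int b" by (auto simp: lam_hom_iff)
  then have "F 0 div (int b + 1) = 0" by (simp add: div_pos_pos_trivial)
  then show ?thesis by (simp add: nrm_def)
qed

lemma nrm_eq: "nrm b F = nrm b G \<Longrightarrow> \<exists>k. F = sh b k G"
proof -
  assume h: "nrm b F = nrm b G"
  define q1 where "q1 = F 0 div (int b + 1)"
  define q2 where "q2 = G 0 div (int b + 1)"
  have "\<forall>i. F i + (- q1) * (int b + 1) = G i + (- q2) * (int b + 1)"
    using h unfolding nrm_def sh_def q1_def q2_def by (simp add: fun_eq_iff)
  then have "\<forall>i. F i = G i + (q1 - q2) * (int b + 1)" by (simp add: algebra_simps)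
  then have "F = sh b (q1 - q2) G" by (simp add: fun_eq_iff)
  then show ?thesis by blast
qed

lemma lam_sh_eq: "F \<in> lam_hom a b \<Longrightarrow> G \<in> lam_hom a b \<Longrightarrow> F = sh b k G \<Longrightarrow> F = G"
proof -
  assume "F \<in> lam_hom a b" "G \<in> lam_hom a b" and e: "F = sh b k G"
  then have "0 \<le> F 0" "F 0 \<le> int b" "0 \<le> G 0" "G 0 \<le> int b" by (auto simp: lam_hom_iff)
  moreover have "F 0 = G 0 + k * (int b + 1)" using e by simp
  ultimately have e2: "k * (int b + 1) = F 0 - G 0" and bd: "0 \<le> F 0" "F 0 \<le> int b" "0 \<le> G 0" "G 0 \<le> int b"
    by simp_all
  have l1: "F 0 - G 0 < int b + 1" "- (int b + 1) < F 0 - G 0" using bd by linarith+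
  have lt1: "k * (int b + 1) < 1 * (int b + 1)" using l1 e2 by simp
  have lt2: "(-1) * (int b + 1) < k * (int b + 1)" using l1 e2 by simp
  have "k < 1" by (rule mult_right_less_imp_less[OF lt1]) simp
  moreover have "-1 < k" by (rule mult_right_less_imp_less[OF lt2]) simp
  ultimately have "k = 0" by simp
  then show ?thesis using e sh_0 by metis
qed

lemma lam_emap: "F \<in> lam_hom a b \<Longrightarrow> emap a b F" by (simp add: lam_hom_iff)

definition ZPB :: "nat \<Rightarrow> nat \<Rightarrow> nat \<Rightarrow> nat \<Rightarrow> (int\<Rightarrow>int) \<Rightarrow> (int\<Rightarrow>int) \<Rightarrow> (int\<Rightarrow>int) \<Rightarrow> (int\<Rightarrow>int) \<Rightarrow> bool" where
  "ZPB P A B C pa pb ga gb \<longleftrightarrow> (\<forall>X x y. emap X A x \<longrightarrow> emap X B y \<longrightarrow> ga \<circ> x = gb \<circ> y \<longrightarrow>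
      (\<exists>!u. emap X P u \<and> pa \<circ> u = x \<and> pb \<circ> u = y))"

definition ZPO :: "nat \<Rightarrow> nat \<Rightarrow> nat \<Rightarrow> nat \<Rightarrow> (int\<Rightarrow>int) \<Rightarrow> (int\<Rightarrow>int) \<Rightarrow> (int\<Rightarrow>int) \<Rightarrow> (int\<Rightarrow>int) \<Rightarrow> bool" where
  "ZPO P A B C pa pb ga gb \<longleftrightarrow> (\<forall>X x y. emap A X x \<longrightarrow> emap B X y \<longrightarrow> x \<circ> pa = y \<circ> pb \<longrightarrow>
      (\<exists>!u. emap C X u \<and> u \<circ> ga = x \<and> u \<circ> gb = y))"

lemma ex1_from: "Q u \<Longrightarrow> (\<And>v w. Q v \<Longrightarrow> Q w \<Longrightarrow> v = w) \<Longrightarrow> \<exists>!u. Q u"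
  by blast

lemma decomp: "emap a b F \<Longrightarrow> F = sh b (F 0 div (int b + 1)) (nrm b F) \<and> nrm b F \<in> lam_hom a b"
  using sh_nrm nrm_lam by blast

lemma commute_shift:
  assumes "lam_comp C ga pa = lam_comp C gb pb" "emap B C gb"
  shows "\<exists>k. ga \<circ> pa = gb \<circ> sh B k pb"
proof -
  from assms(1) have "nrm C (ga \<circ> pa) = nrm C (gb \<circ> pb)" by (simp add: lam_comp_nrm)
  then obtain k where "ga \<circ> pa = sh C k (gb \<circ> pb)" using nrm_eq by blast
  also have "\<dots> = gb \<circ> sh B k pb" using comp_sh_right[OF assms(2)] by simp
  finally show ?thesis by blast
qed

lemma nrm_comp_sh_right: "emap b c G \<Longrightarrow> nrm c (G \<circ> sh b k F) = nrm c (G \<circ> F)"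
  by (simp add: comp_sh_right)

lemma nrm_comp_sh_left: "nrm c (sh c k G \<circ> F) = nrm c (G \<circ> F)"
  by (simp add: sh_comp_left)

lemma R1:
  assumes LP: "lam_pullback P A B C pa pb ga gb" and E: "ga \<circ> pa = gb \<circ> sh B k pb"
  shows "ZPB P A B C pa (sh B k pb) ga gb"
proof -
  have hpa: "pa \<in> lam_hom P A" and hpb: "pb \<in> lam_hom P B" and hga: "ga \<in> lam_hom A C"
    and hgb: "gb \<in> lam_hom B C"
    and U: "\<And>X x y. x \<in> lam_hom X A \<Longrightarrow> y \<in> lam_hom X B \<Longrightarrow> lam_comp C ga x = lam_comp C gb y \<Longrightarrow>
          \<exists>!u. u \<in> lam_hom X P \<and> lam_comp A pa u = x \<and> lam_comp B pb u = y"
    using LP unfolding lam_pullback_def by blast+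
  have epa: "emap P A pa" and epb: "emap P B pb" and ega: "emap A C ga" and egb: "emap B C gb"
    using hpa hpb hga hgb by (simp_all add: lam_hom_iff)
  show ?thesis unfolding ZPB_def
  proof (intro allI impI)
    fix X x y assume ex: "emap X A x" and ey: "emap X B y" and c: "ga \<circ> x = gb \<circ> y"
    define x0 where "x0 = nrm A x"
    define y0 where "y0 = nrm B y"
    have x0l: "x0 \<in> lam_hom X A" using nrm_lam[OF ex] x0_def by simp
    have y0l: "y0 \<in> lam_hom X B" using nrm_lam[OF ey] y0_def by simp
    obtain qx where xq: "x = sh A qx x0" using sh_nrm x0_def by blast
    obtain qy where yq: "y = sh B qy y0" using sh_nrm y0_def by blast
    have c0: "lam_comp C ga x0 = lam_comp C gb y0"
    proof -
      have "lam_comp C ga x0 = nrm C (ga \<circ> x)"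
        by (simp add: lam_comp_nrm xq nrm_comp_sh_right[OF ega])
      also have "\<dots> = nrm C (gb \<circ> y)" using c by simp
      also have "\<dots> = lam_comp C gb y0"
        by (simp add: lam_comp_nrm yq nrm_comp_sh_right[OF egb])
      finally show ?thesis .
    qed
    have ex1: "\<exists>!u. u \<in> lam_hom X P \<and> lam_comp A pa u = x0 \<and> lam_comp B pb u = y0"
      by (rule U[OF x0l y0l c0])
    then obtain u0 where u0: "u0 \<in> lam_hom X P" "lam_comp A pa u0 = x0" "lam_comp B pb u0 = y0"
      and uq: "\<And>u. u \<in> lam_hom X P \<Longrightarrow> lam_comp A pa u = x0 \<Longrightarrow> lam_comp B pb u = y0 \<Longrightarrow> u = u0"
      by blast
    have eu0: "emap X P u0" using u0(1) by (simp add: lam_hom_iff)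
    have "nrm A (pa \<circ> u0) = nrm A x" using u0(2) by (simp add: lam_comp_nrm x0_def)
    then obtain c1 where c1: "pa \<circ> u0 = sh A c1 x" using nrm_eq by blast
    have "nrm B (pb \<circ> u0) = nrm B y" using u0(3) by (simp add: lam_comp_nrm y0_def)
    then obtain d1 where d1: "pb \<circ> u0 = sh B d1 y" using nrm_eq by blast
    have "ga \<circ> (pa \<circ> u0) = sh C c1 (ga \<circ> x)" by (simp add: c1 comp_sh_right[OF ega])
    moreover have "ga \<circ> (pa \<circ> u0) = sh C (k + d1) (ga \<circ> x)"
    proof -
      have "ga \<circ> (pa \<circ> u0) = (ga \<circ> pa) \<circ> u0" by (simp add: comp_assoc)
      also have "\<dots> = gb \<circ> (sh B k (pb \<circ> u0))" by (simp add: E sh_comp_left comp_assoc)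
      also have "\<dots> = sh C (k + d1) (gb \<circ> y)" by (simp add: d1 comp_sh_right[OF egb])
      finally show ?thesis using c by simp
    qed
    ultimately have cd: "c1 = k + d1" using sh_eq_cancel by metis
    define u where "u = sh P (- c1) u0"
    have P1: "emap X P u \<and> pa \<circ> u = x \<and> sh B k pb \<circ> u = y"
    proof (intro conjI)
      show "emap X P u" unfolding u_def by (rule emap_sh[OF eu0])
      show "pa \<circ> u = x" unfolding u_def by (simp add: comp_sh_right[OF epa] c1)
      show "sh B k pb \<circ> u = y" unfolding u_def
        by (simp add: sh_comp_left comp_sh_right[OF epb] d1 cd)
    qed
    have P2: "v = w" if v: "emap X P v \<and> pa \<circ> v = x \<and> sh B k pb \<circ> v = y"
      and w: "emap X P w \<and> pa \<circ> w = x \<and> sh B k pb \<circ> w = y" for v w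
    proof -
      have key: "nrm P z = u0" if z: "emap X P z \<and> pa \<circ> z = x \<and> sh B k pb \<circ> z = y" for z
      proof (rule uq)
        have dz: "z = sh P (z 0 div (int P + 1)) (nrm P z)" and lz: "nrm P z \<in> lam_hom X P"
          using decomp z by blast+
        show "nrm P z \<in> lam_hom X P" by (rule lz)
        have "lam_comp A pa (nrm P z) = nrm A (pa \<circ> z)"
          by (subst (2) dz) (simp add: lam_comp_nrm comp_sh_right[OF epa])
        then show "lam_comp A pa (nrm P z) = x0" using z x0_def by simp
        have "lam_comp B pb (nrm P z) = nrm B (sh B k pb \<circ> z)"
          by (subst (2) dz) (simp add: lam_comp_nrm comp_sh_right[OF epb] sh_comp_left)
        then show "lam_comp B pb (nrm P z) = y0" using z y0_def by simp
      qed
      have nv: "nrm P v = u0" and nw: "nrm P w = u0" using key v w by blast+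
      have dv: "v = sh P (v 0 div (int P + 1)) u0" using decomp v nv by metis
      have dw: "w = sh P (w 0 div (int P + 1)) u0" using decomp w nw by metis
      have "sh A (v 0 div (int P + 1)) (pa \<circ> u0) = sh A (w 0 div (int P + 1)) (pa \<circ> u0)"
        using v w dv dw comp_sh_right[OF epa] by metis
      then have "v 0 div (int P + 1) = w 0 div (int P + 1)" by (rule sh_eq_cancel)
      then show "v = w" using dv dw by simp
    qed
    show "\<exists>!u. emap X P u \<and> pa \<circ> u = x \<and> sh B k pb \<circ> u = y"
      using P1 P2 by blast
  qed
qed

lemma comm_lam:
  assumes "emap B C gb" "ga \<circ> pa = gb \<circ> sh B k pb"
  shows "lam_comp C ga pa = lam_comp C gb pb"
  using assms by (simp add: lam_comp_nrm nrm_comp_sh_right)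

lemma R2:
  assumes hpa: "pa \<in> lam_hom P A" and hpb: "pb \<in> lam_hom P B" and hga: "ga \<in> lam_hom A C"
    and hgb: "gb \<in> lam_hom B C" and E: "ga \<circ> pa = gb \<circ> sh B k pb"
    and Z: "ZPB P A B C pa (sh B k pb) ga gb"
  shows "lam_pullback P A B C pa pb ga gb"
proof -
  have epa: "emap P A pa" and epb: "emap P B pb" and ega: "emap A C ga" and egb: "emap B C gb"
    using hpa hpb hga hgb by (simp_all add: lam_hom_iff)
  have ZU: "\<And>X x y. emap X A x \<Longrightarrow> emap X B y \<Longrightarrow> ga \<circ> x = gb \<circ> y \<Longrightarrow>
      \<exists>!u. emap X P u \<and> pa \<circ> u = x \<and> sh B k pb \<circ> u = y"
    using Z unfolding ZPB_def by blast
  have U: "\<exists>!u. u \<in> lam_hom X P \<and> lam_comp A pa u = x \<and> lam_comp B pb u = y"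
    if hx: "x \<in> lam_hom X A" and hy: "y \<in> lam_hom X B" and c: "lam_comp C ga x = lam_comp C gb y"
    for X x y
  proof -
    have ex: "emap X A x" and ey: "emap X B y" using hx hy by (simp_all add: lam_hom_iff)
    have "nrm C (ga \<circ> x) = nrm C (gb \<circ> y)" using c by (simp add: lam_comp_nrm)
    then obtain e where "ga \<circ> x = sh C e (gb \<circ> y)" using nrm_eq by blast
    then have ce: "ga \<circ> x = gb \<circ> sh B e y" by (simp add: comp_sh_right[OF egb])
    obtain u where u: "emap X P u" "pa \<circ> u = x" "sh B k pb \<circ> u = sh B e y"
      using ZU[OF ex emap_sh[OF ey] ce] by blast
    have du: "u = sh P (u 0 div (int P + 1)) (nrm P u)" and lu: "nrm P u \<in> lam_hom X P"
      using decomp u(1) by blast+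
    have P1: "nrm P u \<in> lam_hom X P \<and> lam_comp A pa (nrm P u) = x \<and> lam_comp B pb (nrm P u) = y"
    proof (intro conjI lu)
      have "lam_comp A pa (nrm P u) = nrm A (pa \<circ> u)"
        by (subst (2) du) (simp add: lam_comp_nrm comp_sh_right[OF epa])
      then show "lam_comp A pa (nrm P u) = x" using u(2) nrm_id[OF hx] by simp
      have "lam_comp B pb (nrm P u) = nrm B (sh B k pb \<circ> u)"
        by (subst (2) du) (simp add: lam_comp_nrm comp_sh_right[OF epb] sh_comp_left)
      then show "lam_comp B pb (nrm P u) = y" using u(3) nrm_id[OF hy] by simp
    qed
    have P2: "v = w" if v: "v \<in> lam_hom X P \<and> lam_comp A pa v = x \<and> lam_comp B pb v = y"
      and w: "w \<in> lam_hom X P \<and> lam_comp A pa w = x \<and> lam_comp B pb w = y" for v w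
    proof -
      have ev: "emap X P v" and ew: "emap X P w" using v w by (simp_all add: lam_hom_iff)
      have "nrm A (pa \<circ> v) = nrm A x" using v nrm_id[OF hx] by (simp add: lam_comp_nrm)
      then obtain cv where cv: "pa \<circ> v = sh A cv x" using nrm_eq by blast
      have "nrm B (pb \<circ> v) = nrm B y" using v nrm_id[OF hy] by (simp add: lam_comp_nrm)
      then obtain dv where dv: "pb \<circ> v = sh B dv y" using nrm_eq by blast
      have "nrm A (pa \<circ> w) = nrm A x" using w nrm_id[OF hx] by (simp add: lam_comp_nrm)
      then obtain cw where cw: "pa \<circ> w = sh A cw x" using nrm_eq by blast
      have "nrm B (pb \<circ> w) = nrm B y" using w nrm_id[OF hy] by (simp add: lam_comp_nrm)
      then obtain dw where dw: "pb \<circ> w = sh B dw y" using nrm_eq by blast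
      have rel: "cz + e = k + dz" if cz: "pa \<circ> z = sh A cz x" and dz: "pb \<circ> z = sh B dz y" for z cz dz
      proof -
        have "ga \<circ> (pa \<circ> z) = sh C (cz + e) (gb \<circ> y)"
          by (simp add: cz comp_sh_right[OF ega] ce comp_sh_right[OF egb])
        moreover have "ga \<circ> (pa \<circ> z) = sh C (k + dz) (gb \<circ> y)"
        proof -
          have "ga \<circ> (pa \<circ> z) = (gb \<circ> sh B k pb) \<circ> z" by (simp add: E[symmetric] comp_assoc)
          also have "\<dots> = gb \<circ> sh B k (pb \<circ> z)" by (simp add: sh_comp_left comp_assoc)
          also have "\<dots> = sh C (k + dz) (gb \<circ> y)" by (simp add: dz comp_sh_right[OF egb])
          finally show ?thesis .
        qed
        ultimately show ?thesis using sh_eq_cancel by metis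
      qed
      have r1: "cv + e = k + dv" by (rule rel[OF cv dv])
      have r2: "cw + e = k + dw" by (rule rel[OF cw dw])
      define w' where "w' = sh P (cv - cw) w"
      have Q1: "emap X P v \<and> pa \<circ> v = sh A cv x \<and> sh B k pb \<circ> v = sh B (k + dv) y"
        using ev cv dv by (simp add: sh_comp_left)
      have Q2: "emap X P w' \<and> pa \<circ> w' = sh A cv x \<and> sh B k pb \<circ> w' = sh B (k + dv) y"
      proof (intro conjI)
        show "emap X P w'" unfolding w'_def by (rule emap_sh[OF ew])
        show "pa \<circ> w' = sh A cv x" unfolding w'_def by (simp add: comp_sh_right[OF epa] cw)
        have hh: "k + (cv - cw + dw) = k + dv" using r1 r2 by simp
        have "sh B k pb \<circ> w' = sh B (k + (cv - cw + dw)) y" unfolding w'_def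
          by (simp add: sh_comp_left comp_sh_right[OF epb] dw)
        also have "\<dots> = sh B (k + dv) y" by (simp only: hh)
        finally show "sh B k pb \<circ> w' = sh B (k + dv) y" .
      qed
      have cc: "ga \<circ> sh A cv x = gb \<circ> sh B (k + dv) y"
      proof -
        have "ga \<circ> sh A cv x = (ga \<circ> pa) \<circ> v" by (simp add: cv comp_assoc)
        also have "\<dots> = gb \<circ> (sh B k pb \<circ> v)" by (simp add: E comp_assoc)
        also have "\<dots> = gb \<circ> sh B (k + dv) y" using Q1 by simp
        finally show ?thesis .
      qed
      have "v = w'" using ZU[OF emap_sh[OF ex] emap_sh[OF ey] cc] Q1 Q2 by blast
      then show "v = w" using lam_sh_eq v w unfolding w'_def by blast
    qed
    show ?thesis using P1 P2 by blast
  qed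
  show ?thesis unfolding lam_pullback_def
    using hpa hpb hga hgb comm_lam[OF egb E] U by blast
qed

lemma R3:
  assumes LP: "lam_pushout P A B C pa pb ga gb" and E: "ga \<circ> pa = gb \<circ> sh B k pb"
  shows "ZPO P A B C pa (sh B k pb) ga gb"
proof -
  have hpa: "pa \<in> lam_hom P A" and hpb: "pb \<in> lam_hom P B" and hga: "ga \<in> lam_hom A C"
    and hgb: "gb \<in> lam_hom B C"
    and U: "\<And>X x y. x \<in> lam_hom A X \<Longrightarrow> y \<in> lam_hom B X \<Longrightarrow> lam_comp X x pa = lam_comp X y pb \<Longrightarrow>
          \<exists>!u. u \<in> lam_hom C X \<and> lam_comp X u ga = x \<and> lam_comp X u gb = y"
    using LP unfolding lam_pushout_def by blast+
  have epa: "emap P A pa" and epb: "emap P B pb" and ega: "emap A C ga" and egb: "emap B C gb"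
    using hpa hpb hga hgb by (simp_all add: lam_hom_iff)
  show ?thesis unfolding ZPO_def
  proof (intro allI impI)
    fix X x y assume ex: "emap A X x" and ey: "emap B X y" and c: "x \<circ> pa = y \<circ> sh B k pb"
    define x0 where "x0 = nrm X x"
    define y0 where "y0 = nrm X y"
    have x0l: "x0 \<in> lam_hom A X" using nrm_lam[OF ex] x0_def by simp
    have y0l: "y0 \<in> lam_hom B X" using nrm_lam[OF ey] y0_def by simp
    obtain qx where xq: "x = sh X qx x0" using sh_nrm x0_def by blast
    obtain qy where yq: "y = sh X qy y0" using sh_nrm y0_def by blast
    have c0: "lam_comp X x0 pa = lam_comp X y0 pb"
    proof -
      have "lam_comp X x0 pa = nrm X (x \<circ> pa)"
        by (simp add: lam_comp_nrm xq nrm_comp_sh_left)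
      also have "\<dots> = nrm X (y \<circ> sh B k pb)" using c by simp
      also have "\<dots> = nrm X (y \<circ> pb)" by (rule nrm_comp_sh_right[OF ey])
      also have "\<dots> = lam_comp X y0 pb"
        by (simp add: lam_comp_nrm yq nrm_comp_sh_left)
      finally show ?thesis .
    qed
    have ex1: "\<exists>!u. u \<in> lam_hom C X \<and> lam_comp X u ga = x0 \<and> lam_comp X u gb = y0"
      by (rule U[OF x0l y0l c0])
    then obtain u0 where u0: "u0 \<in> lam_hom C X" "lam_comp X u0 ga = x0" "lam_comp X u0 gb = y0"
      and uq: "\<And>u. u \<in> lam_hom C X \<Longrightarrow> lam_comp X u ga = x0 \<Longrightarrow> lam_comp X u gb = y0 \<Longrightarrow> u = u0"
      by blast
    have eu0: "emap C X u0" using u0(1) by (simp add: lam_hom_iff)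
    have "nrm X (u0 \<circ> ga) = nrm X x" using u0(2) by (simp add: lam_comp_nrm x0_def)
    then obtain c1 where c1: "u0 \<circ> ga = sh X c1 x" using nrm_eq by blast
    have "nrm X (u0 \<circ> gb) = nrm X y" using u0(3) by (simp add: lam_comp_nrm y0_def)
    then obtain d1 where d1: "u0 \<circ> gb = sh X d1 y" using nrm_eq by blast
    have "u0 \<circ> ga \<circ> pa = sh X c1 (x \<circ> pa)" by (simp add: c1 sh_comp_left)
    moreover have "u0 \<circ> ga \<circ> pa = sh X d1 (x \<circ> pa)"
    proof -
      have "u0 \<circ> ga \<circ> pa = (u0 \<circ> gb) \<circ> sh B k pb" by (simp add: E comp_assoc)
      also have "\<dots> = sh X d1 (x \<circ> pa)" by (simp add: d1 sh_comp_left c)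
      finally show ?thesis .
    qed
    ultimately have cd: "c1 = d1" using sh_eq_cancel by metis
    define u where "u = sh X (- c1) u0"
    have P1: "emap C X u \<and> u \<circ> ga = x \<and> u \<circ> gb = y"
    proof (intro conjI)
      show "emap C X u" unfolding u_def by (rule emap_sh[OF eu0])
      show "u \<circ> ga = x" unfolding u_def by (simp add: sh_comp_left c1)
      show "u \<circ> gb = y" unfolding u_def by (simp add: sh_comp_left d1 cd)
    qed
    have P2: "v = w" if v: "emap C X v \<and> v \<circ> ga = x \<and> v \<circ> gb = y"
      and w: "emap C X w \<and> w \<circ> ga = x \<and> w \<circ> gb = y" for v w
    proof -
      have key: "nrm X z = u0" if z: "emap C X z \<and> z \<circ> ga = x \<and> z \<circ> gb = y" for z
      proof (rule uq)
        have dz: "z = sh X (z 0 div (int X + 1)) (nrm X z)" and lz: "nrm X z \<in> lam_hom C X"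
          using decomp z by blast+
        show "nrm X z \<in> lam_hom C X" by (rule lz)
        have "lam_comp X (nrm X z) ga = nrm X (z \<circ> ga)"
          by (subst (2) dz) (simp add: lam_comp_nrm sh_comp_left)
        then show "lam_comp X (nrm X z) ga = x0" using z x0_def by simp
        have "lam_comp X (nrm X z) gb = nrm X (z \<circ> gb)"
          by (subst (2) dz) (simp add: lam_comp_nrm sh_comp_left)
        then show "lam_comp X (nrm X z) gb = y0" using z y0_def by simp
      qed
      have nv: "nrm X v = u0" and nw: "nrm X w = u0" using key v w by blast+
      have dv: "v = sh X (v 0 div (int X + 1)) u0" using decomp v nv by metis
      have dw: "w = sh X (w 0 div (int X + 1)) u0" using decomp w nw by metis
      have "sh X (v 0 div (int X + 1)) (u0 \<circ> ga) = sh X (w 0 div (int X + 1)) (u0 \<circ> ga)"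
        using v w dv dw sh_comp_left by metis
      then have "v 0 div (int X + 1) = w 0 div (int X + 1)" by (rule sh_eq_cancel)
      then show "v = w" using dv dw by simp
    qed
    show "\<exists>!u. emap C X u \<and> u \<circ> ga = x \<and> u \<circ> gb = y"
      using P1 P2 by blast
  qed
qed

lemma R4:
  assumes hpa: "pa \<in> lam_hom P A" and hpb: "pb \<in> lam_hom P B" and hga: "ga \<in> lam_hom A C"
    and hgb: "gb \<in> lam_hom B C" and E: "ga \<circ> pa = gb \<circ> sh B k pb"
    and Z: "ZPO P A B C pa (sh B k pb) ga gb"
  shows "lam_pushout P A B C pa pb ga gb"
proof -
  have epa: "emap P A pa" and epb: "emap P B pb" and ega: "emap A C ga" and egb: "emap B C gb"
    using hpa hpb hga hgb by (simp_all add: lam_hom_iff)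
  have ZU: "\<And>X x y. emap A X x \<Longrightarrow> emap B X y \<Longrightarrow> x \<circ> pa = y \<circ> sh B k pb \<Longrightarrow>
      \<exists>!u. emap C X u \<and> u \<circ> ga = x \<and> u \<circ> gb = y"
    using Z unfolding ZPO_def by blast
  have U: "\<exists>!u. u \<in> lam_hom C X \<and> lam_comp X u ga = x \<and> lam_comp X u gb = y"
    if hx: "x \<in> lam_hom A X" and hy: "y \<in> lam_hom B X" and c: "lam_comp X x pa = lam_comp X y pb"
    for X x y
  proof -
    have ex: "emap A X x" and ey: "emap B X y" using hx hy by (simp_all add: lam_hom_iff)
    have "nrm X (x \<circ> pa) = nrm X (y \<circ> pb)" using c by (simp add: lam_comp_nrm)
    then obtain e where xe: "x \<circ> pa = sh X e (y \<circ> pb)" using nrm_eq by blast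
    have ysh: "y \<circ> sh B k pb = sh X k (y \<circ> pb)" by (rule comp_sh_right[OF ey])
    have ce: "x \<circ> pa = sh X (e - k) y \<circ> sh B k pb"
      by (simp add: sh_comp_left ysh xe)
    obtain u where u: "emap C X u" "u \<circ> ga = x" "u \<circ> gb = sh X (e - k) y"
      using ZU[OF ex emap_sh[OF ey] ce] by blast
    have du: "u = sh X (u 0 div (int X + 1)) (nrm X u)" and lu: "nrm X u \<in> lam_hom C X"
      using decomp u(1) by blast+
    have P1: "nrm X u \<in> lam_hom C X \<and> lam_comp X (nrm X u) ga = x \<and> lam_comp X (nrm X u) gb = y"
    proof (intro conjI lu)
      have "lam_comp X (nrm X u) ga = nrm X (u \<circ> ga)"
        by (subst (2) du) (simp add: lam_comp_nrm sh_comp_left)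
      then show "lam_comp X (nrm X u) ga = x" using u(2) nrm_id[OF hx] by simp
      have "lam_comp X (nrm X u) gb = nrm X (u \<circ> gb)"
        by (subst (2) du) (simp add: lam_comp_nrm sh_comp_left)
      then show "lam_comp X (nrm X u) gb = y" using u(3) nrm_id[OF hy] by simp
    qed
    have P2: "v = w" if v: "v \<in> lam_hom C X \<and> lam_comp X v ga = x \<and> lam_comp X v gb = y"
      and w: "w \<in> lam_hom C X \<and> lam_comp X w ga = x \<and> lam_comp X w gb = y" for v w
    proof -
      have ev: "emap C X v" and ew: "emap C X w" using v w by (simp_all add: lam_hom_iff)
      have "nrm X (v \<circ> ga) = nrm X x" using v nrm_id[OF hx] by (simp add: lam_comp_nrm)
      then obtain cv where cv: "v \<circ> ga = sh X cv x" using nrm_eq by blast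
      have "nrm X (v \<circ> gb) = nrm X y" using v nrm_id[OF hy] by (simp add: lam_comp_nrm)
      then obtain dv where dv: "v \<circ> gb = sh X dv y" using nrm_eq by blast
      have "nrm X (w \<circ> ga) = nrm X x" using w nrm_id[OF hx] by (simp add: lam_comp_nrm)
      then obtain cw where cw: "w \<circ> ga = sh X cw x" using nrm_eq by blast
      have "nrm X (w \<circ> gb) = nrm X y" using w nrm_id[OF hy] by (simp add: lam_comp_nrm)
      then obtain dw where dw: "w \<circ> gb = sh X dw y" using nrm_eq by blast
      have rel: "cz + e = dz + k" if cz: "z \<circ> ga = sh X cz x" and dz: "z \<circ> gb = sh X dz y" for z cz dz
      proof -
        have "z \<circ> ga \<circ> pa = sh X (cz + e) (y \<circ> pb)"
          by (simp add: cz sh_comp_left comp_assoc xe)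
        moreover have "z \<circ> ga \<circ> pa = sh X (dz + k) (y \<circ> pb)"
        proof -
          have "z \<circ> ga \<circ> pa = (z \<circ> gb) \<circ> sh B k pb" by (simp add: E comp_assoc)
          also have "\<dots> = sh X (dz + k) (y \<circ> pb)" by (simp add: dz sh_comp_left ysh)
          finally show ?thesis .
        qed
        ultimately show ?thesis using sh_eq_cancel by metis
      qed
      have r1: "cv + e = dv + k" by (rule rel[OF cv dv])
      have r2: "cw + e = dw + k" by (rule rel[OF cw dw])
      define w' where "w' = sh X (cv - cw) w"
      have Q1: "emap C X v \<and> v \<circ> ga = sh X cv x \<and> v \<circ> gb = sh X dv y"
        using ev cv dv by simp
      have Q2: "emap C X w' \<and> w' \<circ> ga = sh X cv x \<and> w' \<circ> gb = sh X dv y"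
      proof (intro conjI)
        show "emap C X w'" unfolding w'_def by (rule emap_sh[OF ew])
        show "w' \<circ> ga = sh X cv x" unfolding w'_def by (simp add: sh_comp_left cw)
        have hh: "cv - cw + dw = dv" using r1 r2 by simp
        have "w' \<circ> gb = sh X (cv - cw + dw) y" unfolding w'_def
          by (simp add: sh_comp_left dw)
        also have "\<dots> = sh X dv y" by (simp only: hh)
        finally show "w' \<circ> gb = sh X dv y" .
      qed
      have cc: "sh X cv x \<circ> pa = sh X dv y \<circ> sh B k pb"
      proof -
        have "sh X cv x \<circ> pa = v \<circ> (ga \<circ> pa)" using cv by (metis comp_assoc)
        also have "\<dots> = (v \<circ> gb) \<circ> sh B k pb" by (simp add: E comp_assoc)
        also have "\<dots> = sh X dv y \<circ> sh B k pb" using Q1 by simp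
        finally show ?thesis .
      qed
      have "v = w'" using ZU[OF emap_sh[OF ex] emap_sh[OF ey] cc] Q1 Q2 by blast
      then show "v = w" using lam_sh_eq v w unfolding w'_def by blast
    qed
    show ?thesis using P1 P2 by blast
  qed
  show ?thesis unfolding lam_pushout_def
    using hpa hpb hga hgb comm_lam[OF egb E] U by blast
qed

definition hits :: "(int \<Rightarrow> int) \<Rightarrow> int \<Rightarrow> bool" where
  "hits g j \<longleftrightarrow> (\<exists>k. g k = j)"

definition uniq :: "(int \<Rightarrow> int) \<Rightarrow> int \<Rightarrow> bool" where
  "uniq g j \<longleftrightarrow> (\<exists>!k. g k = j)"

definition ZC :: "(int \<Rightarrow> int) \<Rightarrow> (int \<Rightarrow> int) \<Rightarrow> bool" where
  "ZC ga gb \<longleftrightarrow> (\<forall>j. (uniq ga j \<or> uniq gb j) \<and>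
      ((hits ga (j - 1) \<and> hits ga j) \<or> (hits gb (j - 1) \<and> hits gb j)))"

lemma ZC_sym: "ZC ga gb \<Longrightarrow> ZC gb ga"
  unfolding ZC_def by blast

lemma hits_shift:
  assumes e: "emap a b g" shows "hits g (j + t * (int b + 1)) \<longleftrightarrow> hits g j"
proof
  assume "hits g (j + t * (int b + 1))"
  then obtain l where l: "g l = j + t * (int b + 1)" by (auto simp: hits_def)
  have "g (l + (- t) * (int a + 1)) = g l + (- t) * (int b + 1)" by (rule emap_shift[OF e])
  then show "hits g j" using l unfolding hits_def by (metis add.commute add_minus_cancel mult_minus_left)
next
  assume "hits g j"
  then obtain l where l: "g l = j" by (auto simp: hits_def)
  have "g (l + t * (int a + 1)) = g l + t * (int b + 1)" by (rule emap_shift[OF e])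
  then show "hits g (j + t * (int b + 1))" using l unfolding hits_def by blast
qed

lemma miss_dvd:
  assumes e: "emap a b g" and m: "\<not> hits g j" and d: "(int b + 1) dvd (i - j)"
  shows "\<not> hits g i"
proof -
  obtain t where "i - j = (int b + 1) * t" using d by (auto elim: dvdE)
  then have "i = j + t * (int b + 1)" by (simp add: algebra_simps)
  then show ?thesis using hits_shift[OF e, of j t] m by simp
qed

lemma not_uniq_double:
  assumes e: "emap a b g" and h: "hits g j" and nu: "\<not> uniq g j"
  shows "\<exists>k. g k = j \<and> g (k + 1) = j"
proof -
  obtain k where k: "g k = j" using h by (auto simp: hits_def)
  then obtain k' where k': "g k' = j" "k' \<noteq> k" using nu unfolding uniq_def by blast
  show ?thesis
  proof (cases "k < k'")
    case True
    then have "g k \<le> g (k + 1)" "g (k + 1) \<le> g k'" using emap_mono[OF e] by auto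
    then show ?thesis using k k' by (intro exI[of _ k]) auto
  next
    case False
    then have "k' < k" using k' by simp
    then have "g k' \<le> g (k' + 1)" "g (k' + 1) \<le> g k" using emap_mono[OF e] by auto
    then show ?thesis using k k' by (intro exI[of _ k']) auto
  qed
qed

lemma emap_strict_rev: "emap a b g \<Longrightarrow> g k < g k' \<Longrightarrow> k < k'"
  using emap_mono[of a b g k' k] by (cases "k' \<le> k") auto

lemma ex1_uniq: "\<exists>!x. Q x \<Longrightarrow> Q a \<Longrightarrow> Q b \<Longrightarrow> a = b"
  by blast

lemma emap_lin: "emap 0 A (\<lambda>i::int. k + i * (int A + 1))"
  unfolding emap_def mono_def
proof (intro conjI allI impI)
  fix i j :: int assume "i \<le> j"
  then have "i * (int A + 1) \<le> j * (int A + 1)" by (intro mult_right_mono) auto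
  then show "k + i * (int A + 1) \<le> k + j * (int A + 1)" by simp
next
  fix i :: int show "k + (i + int 0 + 1) * (int A + 1) = k + i * (int A + 1) + int A + 1"
    by (simp add: algebra_simps)
qed

lemma ZPB_surj:
  assumes Z: "ZPB P A B C pa pb ga gb" and ega: "emap A C ga" and egb: "emap B C gb"
    and h: "ga k = gb k'"
  shows "\<exists>p. pa p = k \<and> pb p = k'"
proof -
  define x where "x = (\<lambda>i::int. k + i * (int A + 1))"
  define y where "y = (\<lambda>i::int. k' + i * (int B + 1))"
  have ex: "emap 0 A x" unfolding x_def by (rule emap_lin)
  have ey: "emap 0 B y" unfolding y_def by (rule emap_lin)
  have "ga \<circ> x = gb \<circ> y"
    unfolding x_def y_def fun_eq_iff comp_def
    using emap_shift[OF ega] emap_shift[OF egb] h by (simp add: add.commute)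
  then obtain u where "emap 0 P u" "pa \<circ> u = x" "pb \<circ> u = y"
    using Z ex ey unfolding ZPB_def by blast
  then have "pa (u 0) = k" "pb (u 0) = k'" unfolding x_def y_def by (auto simp: fun_eq_iff)
  then show ?thesis by blast
qed

lemma ZPB_inj:
  assumes Z: "ZPB P A B C pa pb ga gb" and epa: "emap P A pa" and epb: "emap P B pb"
    and E: "ga \<circ> pa = gb \<circ> pb"
    and h: "pa p = pa p'" "pb p = pb p'"
  shows "p = p'"
proof -
  define u1 where "u1 = (\<lambda>i::int. p + i * (int P + 1))"
  define u2 where "u2 = (\<lambda>i::int. p' + i * (int P + 1))"
  have e1: "emap 0 P u1" unfolding u1_def by (rule emap_lin)
  have e2: "emap 0 P u2" unfolding u2_def by (rule emap_lin)
  have a: "pa \<circ> u1 = pa \<circ> u2" unfolding u1_def u2_def fun_eq_iff comp_def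
    using emap_shift[OF epa] h by (simp add: add.commute)
  have b: "pb \<circ> u1 = pb \<circ> u2" unfolding u1_def u2_def fun_eq_iff comp_def
    using emap_shift[OF epb] h by (simp add: add.commute)
  have ex: "emap 0 A (pa \<circ> u1)" by (rule emap_comp[OF e1 epa])
  have ey: "emap 0 B (pb \<circ> u1)" by (rule emap_comp[OF e1 epb])
  have c: "ga \<circ> (pa \<circ> u1) = gb \<circ> (pb \<circ> u1)" using E by (metis comp_assoc)
  have "\<exists>!u. emap 0 P u \<and> pa \<circ> u = pa \<circ> u1 \<and> pb \<circ> u = pb \<circ> u1"
    by (rule Z[unfolded ZPB_def, rule_format, OF ex ey c])
  moreover have "emap 0 P u1 \<and> pa \<circ> u1 = pa \<circ> u1 \<and> pb \<circ> u1 = pb \<circ> u1" using e1 by simp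
  moreover have "emap 0 P u2 \<and> pa \<circ> u2 = pa \<circ> u1 \<and> pb \<circ> u2 = pb \<circ> u1" using e2 a b by simp
  ultimately have "u1 = u2"
    by (rule ex1_uniq[where Q="\<lambda>u. emap 0 P u \<and> pa \<circ> u = pa \<circ> u1 \<and> pb \<circ> u = pb \<circ> u1"])
  then show ?thesis unfolding u1_def u2_def by (metis add.right_neutral mult_zero_left)
qed

lemma mono_from_step:
  assumes st: "\<And>j. u j \<le> u (j + 1)"
  shows "mono (u :: int \<Rightarrow> int)"
proof -
  have "u j \<le> u (j + int n)" for j n
  proof (induction n)
    case 0 then show ?case by simp
  next
    case (Suc n)
    have "u (j + int n) \<le> u (j + int n + 1)" by (rule st)
    moreover have "j + int n + 1 = j + int (Suc n)" by simp
    ultimately show ?case using Suc by (metis order_trans)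
  qed
  then show ?thesis unfolding mono_def
    by (metis add.commute diff_add_cancel nonneg_int_cases le_diff_eq add_0)
qed

lemma ZPO_of_ZC:
  assumes epa: "emap P A pa" and epb: "emap P B pb" and ega: "emap A C ga" and egb: "emap B C gb"
    and surj: "\<And>k k'. ga k = gb k' \<Longrightarrow> \<exists>p. pa p = k \<and> pb p = k'"
    and zc: "ZC ga gb"
  shows "ZPO P A B C pa pb ga gb"
  unfolding ZPO_def
proof (intro allI impI)
  fix X x y assume ex: "emap A X x" and ey: "emap B X y" and c: "x \<circ> pa = y \<circ> pb"
  have cons: "x k = y k'" if hk: "ga k = gb k'" for k k'
  proof -
    obtain p where "pa p = k" "pb p = k'" using surj[OF hk] by blast
    then show ?thesis using c by (metis comp_apply)
  qed
  have zc1: "uniq ga j \<or> uniq gb j" for j using zc unfolding ZC_def by blast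
  have zc2: "(hits ga (j - 1) \<and> hits ga j) \<or> (hits gb (j - 1) \<and> hits gb j)" for j
    using zc unfolding ZC_def by blast
  have js: "hits ga j \<or> hits gb j" for j using zc2[of j] by blast
  define u where "u = (\<lambda>j. if hits ga j then x (SOME k. ga k = j) else y (SOME k. gb k = j))"
  have ua: "u (ga k) = x k" for k
  proof -
    have hh: "hits ga (ga k)" by (auto simp: hits_def)
    define k0 where "k0 = (SOME l. ga l = ga k)"
    have k0: "ga k0 = ga k" unfolding k0_def by (rule someI) simp
    have "x k0 = x k"
    proof (cases "uniq ga (ga k)")
      case True then show ?thesis using k0 unfolding uniq_def by blast
    next
      case False
      then have "uniq gb (ga k)" using zc1 by blast
      then obtain k' where "gb k' = ga k" unfolding uniq_def by blast
      then show ?thesis using cons k0 by metis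
    qed
    then show ?thesis unfolding u_def k0_def using hh by simp
  qed
  have ub: "u (gb k') = y k'" for k'
  proof (cases "hits ga (gb k')")
    case True
    then obtain k where "ga k = gb k'" by (auto simp: hits_def)
    then show ?thesis using ua cons by metis
  next
    case False
    then have nu: "\<not> uniq ga (gb k')" unfolding uniq_def hits_def by blast
    then have un: "uniq gb (gb k')" using zc1 by blast
    define k1 where "k1 = (SOME l. gb l = gb k')"
    have k1: "gb k1 = gb k'" unfolding k1_def by (rule someI) simp
    then have "k1 = k'" using un unfolding uniq_def by blast
    then show ?thesis unfolding u_def using False k1_def by simp
  qed
  have step: "u j \<le> u (j + 1)" for j
  proof -
    from zc2[of "j + 1"] have "(hits ga j \<and> hits ga (j + 1)) \<or> (hits gb j \<and> hits gb (j + 1))"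
      by simp
    then show ?thesis
    proof
      assume "hits ga j \<and> hits ga (j + 1)"
      then obtain k k2 where k: "ga k = j" "ga k2 = j + 1" by (auto simp: hits_def)
      then have "k < k2" using emap_strict_rev[OF ega, of k k2] by simp
      then have "x k \<le> x k2" using emap_mono[OF ex] by simp
      then show ?thesis using ua k by metis
    next
      assume "hits gb j \<and> hits gb (j + 1)"
      then obtain k k2 where k: "gb k = j" "gb k2 = j + 1" by (auto simp: hits_def)
      then have "k < k2" using emap_strict_rev[OF egb, of k k2] by simp
      then have "y k \<le> y k2" using emap_mono[OF ey] by simp
      then show ?thesis using ub k by metis
    qed
  qed
  have per: "u (j + int C + 1) = u j + int X + 1" for j
  proof (cases "hits ga j")
    case True
    then obtain k where k: "ga k = j" by (auto simp: hits_def)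
    have "u (j + int C + 1) = u (ga (k + int A + 1))" using emap_step[OF ega] k by simp
    also have "\<dots> = x (k + int A + 1)" by (rule ua)
    also have "\<dots> = x k + int X + 1" by (rule emap_step[OF ex])
    finally show ?thesis using ua k by metis
  next
    case False
    then have "hits gb j" using js by blast
    then obtain k where k: "gb k = j" by (auto simp: hits_def)
    have "u (j + int C + 1) = u (gb (k + int B + 1))" using emap_step[OF egb] k by simp
    also have "\<dots> = y (k + int B + 1)" by (rule ub)
    also have "\<dots> = y k + int X + 1" by (rule emap_step[OF ey])
    finally show ?thesis using ub k by metis
  qed
  have eu: "emap C X u" unfolding emap_def using mono_from_step[of u, OF step] per by blast
  have P1: "emap C X u \<and> u \<circ> ga = x \<and> u \<circ> gb = y"
    using eu ua ub by (auto simp: fun_eq_iff)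
  have P2: "v = w" if v: "emap C X v \<and> v \<circ> ga = x \<and> v \<circ> gb = y"
    and w: "emap C X w \<and> w \<circ> ga = x \<and> w \<circ> gb = y" for v w
  proof (rule ext)
    fix j
    show "v j = w j"
    proof (cases "hits ga j")
      case True
      then obtain k where "ga k = j" by (auto simp: hits_def)
      then show ?thesis using v w by (metis comp_apply)
    next
      case False
      then have "hits gb j" using js by blast
      then obtain k where "gb k = j" by (auto simp: hits_def)
      then show ?thesis using v w by (metis comp_apply)
    qed
  qed
  show "\<exists>!u. emap C X u \<and> u \<circ> ga = x \<and> u \<circ> gb = y" using P1 P2 by blast
qed

lemma div_eq_from_bounds:
  fixes a M t :: int assumes M: "0 < M" and l: "t * M \<le> a" and u: "a < t * M + M"
  shows "a div M = t"
proof -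
  have "(a + (- t) * M) div M = 0" using l u M by (intro div_pos_pos_trivial) auto
  moreover have "(a + (- t) * M) div M = - t + a div M" using M by (simp only: div_mult_self1)
  ultimately show ?thesis by simp
qed

lemma divstep:
  fixes a M :: int assumes M: "0 < M" and nd: "\<not> M dvd (a + 1)"
  shows "(a + 1) div M = a div M"
proof -
  obtain q r where q: "q = a div M" and r: "r = a mod M" by blast
  have a: "a = q * M + r" using q r div_mult_mod_eq[of a M] by simp
  have r0: "0 \<le> r" "r < M" using M r by simp_all
  have "r + 1 \<noteq> M"
  proof
    assume "r + 1 = M"
    then have "a + 1 = M * (q + 1)" using a by (simp add: algebra_simps)
    then show False using nd by simp
  qed
  then have r1: "r + 1 < M" using r0 by linarith
  have "(a + 1) div M = q"
  proof (rule div_eq_from_bounds[OF M])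
    show "q * M \<le> a + 1" using a r0 by linarith
    show "a + 1 < q * M + M" using a r1 by linarith
  qed
  then show ?thesis using q by simp
qed

definition PHI :: "(int\<Rightarrow>int) \<Rightarrow> (int\<Rightarrow>int) \<Rightarrow> (int\<Rightarrow>int) \<Rightarrow> (int\<Rightarrow>int) \<Rightarrow> bool" where
  "PHI pa pb ga gb \<longleftrightarrow> ga \<circ> pa = gb \<circ> pb \<and>
     (\<forall>k k'. ga k = gb k' \<longrightarrow> (\<exists>p. pa p = k \<and> pb p = k')) \<and>
     (\<forall>p p'. pa p = pa p' \<longrightarrow> pb p = pb p' \<longrightarrow> p = p')"

lemma PHI_of_ZPB:
  assumes Z: "ZPB P A B C pa pb ga gb" and "emap P A pa" "emap P B pb" "emap A C ga" "emap B C gb"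
    and E: "ga \<circ> pa = gb \<circ> pb"
  shows "PHI pa pb ga gb"
  unfolding PHI_def using E ZPB_surj[OF Z assms(4,5)] ZPB_inj[OF Z assms(2,3) E] by blast

lemma ZPB_of_PHI:
  assumes epa: "emap P A pa" and epb: "emap P B pb" and ega: "emap A C ga" and egb: "emap B C gb"
    and H: "PHI pa pb ga gb"
  shows "ZPB P A B C pa pb ga gb"
  unfolding ZPB_def
proof (intro allI impI)
  have surj: "\<And>k k'. ga k = gb k' \<Longrightarrow> \<exists>p. pa p = k \<and> pb p = k'" using H unfolding PHI_def by blast
  have inj: "\<And>p p'. pa p = pa p' \<Longrightarrow> pb p = pb p' \<Longrightarrow> p = p'" using H unfolding PHI_def by blast
  fix X x y assume ex: "emap X A x" and ey: "emap X B y" and c: "ga \<circ> x = gb \<circ> y"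
  have pt: "\<exists>p. pa p = x i \<and> pb p = y i" for i using surj c by (metis comp_apply)
  define u where "u = (\<lambda>i. SOME p. pa p = x i \<and> pb p = y i)"
  have uu: "pa (u i) = x i \<and> pb (u i) = y i" for i unfolding u_def by (rule someI_ex[OF pt])
  have per: "u (i + int X + 1) = u i + int P + 1" for i
  proof (rule inj)
    show "pa (u (i + int X + 1)) = pa (u i + int P + 1)"
      using uu emap_step[OF epa] emap_step[OF ex] by metis
    show "pb (u (i + int X + 1)) = pb (u i + int P + 1)"
      using uu emap_step[OF epb] emap_step[OF ey] by metis
  qed
  have mo: "mono u" unfolding mono_def
  proof (intro allI impI)
    fix i i' :: int assume ii: "i \<le> i'"
    show "u i \<le> u i'"
    proof (rule ccontr)
      assume "\<not> u i \<le> u i'"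
      then have lt: "u i' \<le> u i" by simp
      have "pa (u i') \<le> pa (u i)" "pb (u i') \<le> pb (u i)" using emap_mono[OF epa lt] emap_mono[OF epb lt] .
      moreover have "x i \<le> x i'" "y i \<le> y i'" using emap_mono[OF ex ii] emap_mono[OF ey ii] .
      ultimately have "pa (u i) = pa (u i')" "pb (u i) = pb (u i')" using uu by (metis order_antisym)+
      then have "u i = u i'" by (rule inj)
      then show False using \<open>\<not> u i \<le> u i'\<close> by simp
    qed
  qed
  have P1: "emap X P u \<and> pa \<circ> u = x \<and> pb \<circ> u = y"
    using mo per uu by (auto simp: emap_def fun_eq_iff)
  have P2: "v = w" if v: "emap X P v \<and> pa \<circ> v = x \<and> pb \<circ> v = y"
    and w: "emap X P w \<and> pa \<circ> w = x \<and> pb \<circ> w = y" for v w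
  proof (rule ext)
    fix i
    have "pa (v i) = pa (w i)" "pb (v i) = pb (w i)" using v w by (metis comp_apply)+
    then show "v i = w i" by (rule inj)
  qed
  show "\<exists>!u. emap X P u \<and> pa \<circ> u = x \<and> pb \<circ> u = y" using P1 P2 by blast
qed

lemma ZPO_sym: "ZPO P A B C pa pb ga gb \<Longrightarrow> ZPO P B A C pb pa gb ga"
  unfolding ZPO_def
proof (intro allI impI)
  fix X x y
  assume Z: "\<forall>X x y. emap A X x \<longrightarrow> emap B X y \<longrightarrow> x \<circ> pa = y \<circ> pb \<longrightarrow>
      (\<exists>!u. emap C X u \<and> u \<circ> ga = x \<and> u \<circ> gb = y)"
    and ex: "emap B X x" and ey: "emap A X y" and c: "x \<circ> pb = y \<circ> pa"
  have "\<exists>!u. emap C X u \<and> u \<circ> ga = y \<and> u \<circ> gb = x" using Z ey ex c by simp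
  then show "\<exists>!u. emap C X u \<and> u \<circ> gb = x \<and> u \<circ> ga = y" by (simp add: conj_commute conj_left_commute)
qed

lemma ZPB_sym: "ZPB P A B C pa pb ga gb \<Longrightarrow> ZPB P B A C pb pa gb ga"
  unfolding ZPB_def
proof (intro allI impI)
  fix X x y
  assume Z: "\<forall>X x y. emap X A x \<longrightarrow> emap X B y \<longrightarrow> ga \<circ> x = gb \<circ> y \<longrightarrow>
      (\<exists>!u. emap X P u \<and> pa \<circ> u = x \<and> pb \<circ> u = y)"
    and ex: "emap X B x" and ey: "emap X A y" and c: "gb \<circ> x = ga \<circ> y"
  have "\<exists>!u. emap X P u \<and> pa \<circ> u = y \<and> pb \<circ> u = x" using Z ey ex c by simp
  then show "\<exists>!u. emap X P u \<and> pb \<circ> u = x \<and> pa \<circ> u = y" by (simp add: conj_commute conj_left_commute)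
qed

lemma emap_cut: "emap a 0 (\<lambda>l::int. (l - c) div (int a + 1) + 1)"
  unfolding emap_def mono_def
proof (intro conjI allI impI)
  fix i j :: int assume "i \<le> j"
  then show "(i - c) div (int a + 1) + 1 \<le> (j - c) div (int a + 1) + 1"
    by (simp add: zdiv_mono1)
next
  fix i :: int
  have "(i + int a + 1 - c) = (i - c) + 1 * (int a + 1)" by simp
  then have "(i + int a + 1 - c) div (int a + 1) = (i - c) div (int a + 1) + 1"
    by (simp only: div_mult_self1)
  then show "(i + int a + 1 - c) div (int a + 1) + 1 = (i - c) div (int a + 1) + 1 + int 0 + 1"
    by simp
qed

lemma emap_id: "emap a a id"
  by (simp add: emap_def mono_def)

lemma jsurj:
  assumes Z: "ZPO P A B C pa pb ga gb" and ega: "emap A C ga" and egb: "emap B C gb"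
    and E: "ga \<circ> pa = gb \<circ> pb"
  shows "hits ga j \<or> hits gb j"
proof (rule ccontr)
  assume "\<not> (hits ga j \<or> hits gb j)"
  then have na: "\<not> hits ga j" and nb: "\<not> hits gb j" by auto
  define M where "M = int C + 1"
  have M: "0 < M" unfolding M_def by simp
  define u2 where "u2 = (\<lambda>i. if M dvd (i - j) then i + 1 else i)"
  have eu2: "emap C C u2" unfolding emap_def mono_def
  proof (intro conjI allI impI)
    fix i i' :: int assume "i \<le> i'"
    then show "u2 i \<le> u2 i'" unfolding u2_def by (cases "i = i'") auto
  next
    fix i :: int
    have hh: "i + int C + 1 - j = (i - j) + M" unfolding M_def by simp
    have "M dvd (i + int C + 1 - j) \<longleftrightarrow> M dvd (i - j)" unfolding hh by simp
    then show "u2 (i + int C + 1) = u2 i + int C + 1" unfolding u2_def by simp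
  qed
  have ma: "u2 \<circ> ga = ga"
  proof (rule ext)
    fix l
    have "\<not> M dvd (ga l - j)"
    proof
      assume "M dvd (ga l - j)"
      then have "\<not> hits ga (ga l)" using miss_dvd[OF ega na] unfolding M_def by blast
      then show False by (auto simp: hits_def)
    qed
    then show "(u2 \<circ> ga) l = ga l" unfolding u2_def by simp
  qed
  have mb: "u2 \<circ> gb = gb"
  proof (rule ext)
    fix l
    have "\<not> M dvd (gb l - j)"
    proof
      assume "M dvd (gb l - j)"
      then have "\<not> hits gb (gb l)" using miss_dvd[OF egb nb] unfolding M_def by blast
      then show False by (auto simp: hits_def)
    qed
    then show "(u2 \<circ> gb) l = gb l" unfolding u2_def by simp
  qed
  have ex1: "\<exists>!u. emap C C u \<and> u \<circ> ga = ga \<and> u \<circ> gb = gb"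
    by (rule Z[unfolded ZPO_def, rule_format, OF ega egb E])
  have "emap C C id \<and> id \<circ> ga = ga \<and> id \<circ> gb = gb" using emap_id by simp
  moreover have "emap C C u2 \<and> u2 \<circ> ga = ga \<and> u2 \<circ> gb = gb" using eu2 ma mb by simp
  ultimately have "id = u2" using ex1_uniq[where Q="\<lambda>u. emap C C u \<and> u \<circ> ga = ga \<and> u \<circ> gb = gb", OF ex1] by blast
  then have "u2 j = j" by (metis id_apply)
  then show False unfolding u2_def by simp
qed

lemma div_bounds:
  fixes a M :: int assumes "0 < M"
  shows "(a div M) * M \<le> a" "a < (a div M) * M + M"
proof -
  have a: "a = (a div M) * M + a mod M" by simp
  have "0 \<le> a mod M" "a mod M < M" using assms by simp_all
  then show "(a div M) * M \<le> a" "a < (a div M) * M + M" using a by linarith+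
qed

lemma cutC3:
  assumes Z: "ZPO P A B C pa pb ga gb" and ega: "emap A C ga" and egb: "emap B C gb"
    and E: "ga \<circ> pa = gb \<circ> pb"
    and na: "\<not> hits ga j" and d1: "gb k' = j" and d2: "gb (k' + 1) = j"
  shows False
proof -
  define y where "y = (\<lambda>l::int. (l - (k' + 1)) div (int B + 1) + 1)"
  define z where "z = (\<lambda>i::int. (i - j) div (int C + 1) + 1)"
  have ey: "emap B 0 y" unfolding y_def by (rule emap_cut)
  have ez: "emap C 0 z" unfolding z_def by (rule emap_cut)
  have ex: "emap A 0 (z \<circ> ga)" by (rule emap_comp[OF ega ez])
  have key: "z (gb l') = y l'" if hl: "hits ga (gb l')" for l'
  proof -
    define t where "t = (l' - (k' + 1)) div (int B + 1)"
    have lb: "t * (int B + 1) \<le> l' - (k' + 1)" and ub: "l' - (k' + 1) < t * (int B + 1) + (int B + 1)"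
      unfolding t_def using div_bounds[of "int B + 1" "l' - (k' + 1)"] by simp_all
    have "k' + 1 + t * (int B + 1) \<le> l'" using lb by simp
    then have "gb (k' + 1 + t * (int B + 1)) \<le> gb l'" by (rule emap_mono[OF egb])
    then have g1: "j + t * (int C + 1) \<le> gb l'" using emap_shift[OF egb] d2 by simp
    have "l' \<le> k' + (t + 1) * (int B + 1)" using ub by (simp add: algebra_simps)
    then have "gb l' \<le> gb (k' + (t + 1) * (int B + 1))" by (rule emap_mono[OF egb])
    then have g2: "gb l' \<le> j + (t + 1) * (int C + 1)" using emap_shift[OF egb] d1 by simp
    have n1: "gb l' \<noteq> j + t * (int C + 1)"
      using hl hits_shift[OF ega, of j t] na by auto
    have n2: "gb l' \<noteq> j + (t + 1) * (int C + 1)"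
      using hl hits_shift[OF ega, of j "t + 1"] na by auto
    have "(gb l' - j) div (int C + 1) = t"
    proof (rule div_eq_from_bounds)
      show "0 < int C + 1" by simp
      show "t * (int C + 1) \<le> gb l' - j" using g1 by simp
      show "gb l' - j < t * (int C + 1) + (int C + 1)" using g2 n2 by (simp add: algebra_simps)
    qed
    then show ?thesis unfolding z_def y_def t_def by simp
  qed
  have c: "(z \<circ> ga) \<circ> pa = y \<circ> pb"
  proof (rule ext)
    fix p
    have e1: "ga (pa p) = gb (pb p)" using E by (metis comp_apply)
    then have "hits ga (gb (pb p))" by (auto simp: hits_def)
    then show "((z \<circ> ga) \<circ> pa) p = (y \<circ> pb) p" using key e1 by simp
  qed
  obtain u where u: "emap C 0 u" "u \<circ> ga = z \<circ> ga" "u \<circ> gb = y"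
    using Z[unfolded ZPO_def, rule_format, OF ex ey c] by blast
  have "u (gb k') = y k'" "u (gb (k' + 1)) = y (k' + 1)" using u(3) by (metis comp_apply)+
  moreover have "y k' = 0" unfolding y_def by (simp add: div_eq_minus1)
  moreover have "y (k' + 1) = 1" unfolding y_def by simp
  ultimately show False using d1 d2 by simp
qed

lemma doubleC:
  assumes Z: "ZPB P A B C pa pb ga gb" and epa: "emap P A pa" and epb: "emap P B pb"
    and ega: "emap A C ga" and egb: "emap B C gb"
    and h: "ga k = j" "ga (k + 1) = j" "gb k' = j" "gb (k' + 1) = j"
  shows False
proof -
  obtain p where p: "pa p = k + 1" "pb p = k'" using ZPB_surj[OF Z ega egb, of "k + 1" k'] h by auto
  obtain p' where p': "pa p' = k" "pb p' = k' + 1" using ZPB_surj[OF Z ega egb, of k "k' + 1"] h by auto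
  show False
  proof (cases "p \<le> p'")
    case True
    then have "pa p \<le> pa p'" by (rule emap_mono[OF epa])
    then show False using p p' by simp
  next
    case False
    then have "p' \<le> p" by simp
    then have "pb p' \<le> pb p" by (rule emap_mono[OF epb])
    then show False using p p' by simp
  qed
qed

lemma C4:
  assumes Z: "ZPO P A B C pa pb ga gb" and ega: "emap A C ga" and egb: "emap B C gb"
    and E: "ga \<circ> pa = gb \<circ> pb"
    and na: "\<not> hits ga (j - 1)" and ha: "ga k = j" and hb: "gb k2 = j - 1" and nb: "\<not> hits gb j"
  shows False
proof -
  define M where "M = int C + 1"
  have M: "0 < M" unfolding M_def by simp
  define za where "za = (\<lambda>i::int. (i - (j + 1)) div (int C + 1) + 1)"
  define zb where "zb = (\<lambda>i::int. (i - (j - 1)) div (int C + 1) + 1)"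
  have eza: "emap C 0 za" unfolding za_def by (rule emap_cut)
  have ezb: "emap C 0 zb" unfolding zb_def by (rule emap_cut)
  have ex: "emap A 0 (za \<circ> ga)" by (rule emap_comp[OF ega eza])
  have ey: "emap B 0 (zb \<circ> gb)" by (rule emap_comp[OF egb ezb])
  have key: "za i = zb i" if hga: "hits ga i" and hgb: "hits gb i" for i
  proof -
    have d1: "\<not> M dvd (i - (j - 1))" using miss_dvd[OF ega na, of i] hga unfolding M_def by blast
    have d2: "\<not> M dvd (i - j)" using miss_dvd[OF egb nb, of i] hgb unfolding M_def by blast
    have s1: "((i - (j + 1)) + 1) div M = (i - (j + 1)) div M"
      by (rule divstep[OF M]) (use d2 in \<open>simp add: algebra_simps\<close>)
    have s2: "((i - (j + 1) + 1) + 1) div M = (i - (j + 1) + 1) div M"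
      by (rule divstep[OF M]) (use d1 in \<open>simp add: algebra_simps\<close>)
    have e3: "i - (j - 1) = i - j + 1" by simp
    have e4: "i - (j + 1) + 1 = i - j" by simp
    have "(i - (j - 1)) div M = (i - (j + 1)) div M" using s1 s2 unfolding e3 e4 by simp
    then show ?thesis unfolding za_def zb_def M_def by simp
  qed
  have c: "(za \<circ> ga) \<circ> pa = (zb \<circ> gb) \<circ> pb"
  proof (rule ext)
    fix p
    have e1: "ga (pa p) = gb (pb p)" using E by (metis comp_apply)
    have "hits ga (gb (pb p))" "hits gb (gb (pb p))" using e1 by (auto simp: hits_def)
    then show "((za \<circ> ga) \<circ> pa) p = ((zb \<circ> gb) \<circ> pb) p" using key e1 by simp
  qed
  obtain u where u: "emap C 0 u" "u \<circ> ga = za \<circ> ga" "u \<circ> gb = zb \<circ> gb"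
    using Z[unfolded ZPO_def, rule_format, OF ex ey c] by blast
  have "u (ga k) = za (ga k)" "u (gb k2) = zb (gb k2)" using u(2,3) by (metis comp_apply)+
  then have "u j = za j" "u (j - 1) = zb (j - 1)" using ha hb by simp_all
  moreover have "za j = 0" unfolding za_def by (simp add: div_eq_minus1)
  moreover have "zb (j - 1) = 1" unfolding zb_def by simp
  moreover have "u (j - 1) \<le> u j" by (rule emap_mono[OF u(1)]) simp
  ultimately show False by simp
qed

lemma ZC_of_square:
  assumes ZB: "ZPB P A B C pa pb ga gb" and ZO: "ZPO P A B C pa pb ga gb"
    and epa: "emap P A pa" and epb: "emap P B pb" and ega: "emap A C ga" and egb: "emap B C gb"
    and E: "ga \<circ> pa = gb \<circ> pb"
  shows "ZC ga gb"
  unfolding ZC_def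
proof (intro allI conjI)
  have ZO': "ZPO P B A C pb pa gb ga" by (rule ZPO_sym[OF ZO])
  have E': "gb \<circ> pb = ga \<circ> pa" using E by simp
  have js: "hits ga i \<or> hits gb i" for i by (rule jsurj[OF ZO ega egb E])
  fix j
  show "uniq ga j \<or> uniq gb j"
  proof (rule ccontr)
    assume "\<not> (uniq ga j \<or> uniq gb j)"
    then have nua: "\<not> uniq ga j" and nub: "\<not> uniq gb j" by auto
    show False
    proof (cases "hits ga j")
      case True
      then obtain k where k: "ga k = j" "ga (k + 1) = j" using not_uniq_double[OF ega _ nua] by blast
      show False
      proof (cases "hits gb j")
        case True
        then obtain k' where "gb k' = j" "gb (k' + 1) = j" using not_uniq_double[OF egb _ nub] by blast
        then show False using doubleC[OF ZB epa epb ega egb k] by blast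
      next
        case False
        then show False using cutC3[OF ZO' egb ega E' False k] by blast
      qed
    next
      case False
      then have "hits gb j" using js by blast
      then obtain k' where "gb k' = j" "gb (k' + 1) = j" using not_uniq_double[OF egb _ nub] by blast
      then show False using cutC3[OF ZO ega egb E False] by blast
    qed
  qed
  show "(hits ga (j - 1) \<and> hits ga j) \<or> (hits gb (j - 1) \<and> hits gb j)"
  proof (rule ccontr)
    assume H: "\<not> ((hits ga (j - 1) \<and> hits ga j) \<or> (hits gb (j - 1) \<and> hits gb j))"
    have j1: "hits ga (j - 1) \<or> hits gb (j - 1)" by (rule js)
    have j2: "hits ga j \<or> hits gb j" by (rule js)
    show False
    proof (cases "hits ga j")
      case True
      then have "\<not> hits ga (j - 1)" using H by blast
      then have "hits gb (j - 1)" using j1 by blast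
      then have "\<not> hits gb j" using H by blast
      show False
        using C4[OF ZO ega egb E \<open>\<not> hits ga (j - 1)\<close>] True \<open>hits gb (j - 1)\<close> \<open>\<not> hits gb j\<close>
        unfolding hits_def by blast
    next
      case False
      then have "hits gb j" using j2 by blast
      then have "\<not> hits gb (j - 1)" using H by blast
      then have "hits ga (j - 1)" using j1 by blast
      show False
        using C4[OF ZO' egb ega E' \<open>\<not> hits gb (j - 1)\<close>] False \<open>hits gb j\<close> \<open>hits ga (j - 1)\<close>
        unfolding hits_def by blast
    qed
  qed
qed

lemma fib_hits: "PHI pa pb ga gb \<Longrightarrow> hits pa k \<longleftrightarrow> hits gb (ga k)"
  unfolding PHI_def hits_def by (metis comp_apply)

lemma fib_uniq:
  assumes H: "PHI pa pb ga gb" shows "uniq pa k \<longleftrightarrow> uniq gb (ga k)"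
proof -
  have E: "\<And>p. ga (pa p) = gb (pb p)" using H unfolding PHI_def by (metis comp_apply)
  have surj: "\<And>k k'. ga k = gb k' \<Longrightarrow> \<exists>p. pa p = k \<and> pb p = k'" using H unfolding PHI_def by blast
  have inj: "\<And>p p'. pa p = pa p' \<Longrightarrow> pb p = pb p' \<Longrightarrow> p = p'" using H unfolding PHI_def by blast
  show ?thesis
  proof
    assume "uniq pa k"
    then obtain p0 where p0: "pa p0 = k" and u: "\<And>p. pa p = k \<Longrightarrow> p = p0" unfolding uniq_def by blast
    have "gb (pb p0) = ga k" using E[of p0] p0 by simp
    moreover have "k' = pb p0" if hk: "gb k' = ga k" for k'
    proof -
      obtain p where "pa p = k" "pb p = k'" using surj[OF hk[symmetric]] by blast
      then show ?thesis using u by blast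
    qed
    ultimately show "uniq gb (ga k)" unfolding uniq_def by blast
  next
    assume "uniq gb (ga k)"
    then obtain k0 where k0: "gb k0 = ga k" and u: "\<And>k'. gb k' = ga k \<Longrightarrow> k' = k0" unfolding uniq_def by blast
    obtain p0 where p0: "pa p0 = k" "pb p0 = k0" using surj k0 by metis
    moreover have "p = p0" if "pa p = k" for p
    proof (rule inj)
      show "pa p = pa p0" using that p0 by simp
      have "gb (pb p) = ga k" using E[of p] that by simp
      then show "pb p = pb p0" using u p0 by metis
    qed
    ultimately show "uniq pa k" unfolding uniq_def by blast
  qed
qed

lemma transfer:
  assumes ega: "emap A C ga" and zab: "ZC ga gb" and zbc: "ZC gb gc"
    and H1: "PHI pa1 pb1 ga gb" and H2: "PHI pa2 pc2 ga gc"
  shows "ZC pa1 pa2"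
  unfolding ZC_def
proof (intro allI conjI)
  fix k
  show "uniq pa1 k \<or> uniq pa2 k"
  proof -
    have "uniq gb (ga k) \<or> uniq gc (ga k)" using zbc unfolding ZC_def by blast
    then show ?thesis using fib_uniq[OF H1, of k] fib_uniq[OF H2, of k] by simp
  qed
  define j1 where "j1 = ga (k - 1)"
  define j2 where "j2 = ga k"
  have le: "j1 \<le> j2" unfolding j1_def j2_def using emap_mono[OF ega, of "k - 1" k] by simp
  have goal: "(hits gb j1 \<and> hits gb j2) \<or> (hits gc j1 \<and> hits gc j2)"
  proof (cases "j2 = j1 \<or> j2 = j1 + 1")
    case True
    have z: "(hits gb (j2 - 1) \<and> hits gb j2) \<or> (hits gc (j2 - 1) \<and> hits gc j2)"
      using zbc unfolding ZC_def by blast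
    from True show ?thesis
    proof
      assume "j2 = j1" then show ?thesis using z by blast
    next
      assume "j2 = j1 + 1" then have "j2 - 1 = j1" by simp
      then show ?thesis using z by simp
    qed
  next
    case False
    then have gt: "j1 + 1 < j2" using le by linarith
    have miss: "\<not> hits ga i" if "j1 < i" "i < j2" for i
    proof
      assume "hits ga i"
      then obtain l where l: "ga l = i" by (auto simp: hits_def)
      show False
      proof (cases "l \<le> k - 1")
        case True
        then have "ga l \<le> j1" unfolding j1_def by (rule emap_mono[OF ega])
        then show False using l that by simp
      next
        case False
        then have "k \<le> l" by simp
        then have "j2 \<le> ga l" unfolding j2_def by (rule emap_mono[OF ega])
        then show False using l that by simp
      qed
    qed
    have "hits gb j1"
    proof -
      have "(hits ga (j1 + 1 - 1) \<and> hits ga (j1 + 1)) \<or> (hits gb (j1 + 1 - 1) \<and> hits gb (j1 + 1))"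
        using zab unfolding ZC_def by blast
      moreover have "\<not> hits ga (j1 + 1)" using miss gt by simp
      ultimately show ?thesis by simp
    qed
    moreover have "hits gb j2"
    proof -
      have "(hits ga (j2 - 1) \<and> hits ga j2) \<or> (hits gb (j2 - 1) \<and> hits gb j2)"
        using zab unfolding ZC_def by blast
      moreover have "\<not> hits ga (j2 - 1)" using miss gt by simp
      ultimately show ?thesis by simp
    qed
    ultimately show ?thesis by simp
  qed
  then show "(hits pa1 (k - 1) \<and> hits pa1 k) \<or> (hits pa2 (k - 1) \<and> hits pa2 k)"
    using fib_hits[OF H1, of "k - 1"] fib_hits[OF H1, of k] fib_hits[OF H2, of "k - 1"] fib_hits[OF H2, of k]
    unfolding j1_def j2_def by simp
qed

lemma d2l_decomp:
  "delta_to_lambda m n g l = int (g (nat (l mod (int m + 1)))) + (int n + 1) * (l div (int m + 1))"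
  by (simp add: delta_to_lambda_def)

lemma d2l_emap:
  assumes dm: "delta_mor m n g" shows "emap m n (delta_to_lambda m n g)"
  unfolding emap_def mono_def
proof (intro conjI allI impI)
  have gb: "\<And>r. r \<le> m \<Longrightarrow> g r \<le> n" and gm: "\<And>r r'. r \<le> r' \<Longrightarrow> r' \<le> m \<Longrightarrow> g r \<le> g r'"
    using dm unfolding delta_mor_def by auto
  define M where "M = int m + 1"
  have M: "0 < M" unfolding M_def by simp
  fix i i' :: int assume ii: "i \<le> i'"
  define q where "q = i div M"
  define q' where "q' = i' div M"
  define r where "r = i mod M"
  define r' where "r' = i' mod M"
  have qq: "q \<le> q'" unfolding q_def q'_def using zdiv_mono1[OF ii M] .
  have r0: "0 \<le> r" "r < M" "0 \<le> r'" "r' < M" unfolding r_def r'_def using M by simp_all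
  have ia: "i = q * M + r" "i' = q' * M + r'" unfolding q_def r_def q'_def r'_def by simp_all
  have rm: "nat r \<le> m" "nat r' \<le> m" using r0 unfolding M_def by auto
  show "delta_to_lambda m n g i \<le> delta_to_lambda m n g i'"
  proof (cases "q = q'")
    case True
    then have "r \<le> r'" using ia ii by simp
    then have "g (nat r) \<le> g (nat r')" using gm rm by simp
    then show ?thesis using True unfolding d2l_decomp M_def[symmetric] q_def[symmetric] q'_def[symmetric]
      r_def[symmetric] r'_def[symmetric] by simp
  next
    case False
    then have "q + 1 \<le> q'" using qq by simp
    then have "(int n + 1) * (q + 1) \<le> (int n + 1) * q'" by (intro mult_left_mono) auto
    moreover have "int (g (nat r)) \<le> int n" using gb rm by simp
    ultimately have "int (g (nat r)) + (int n + 1) * q \<le> int (g (nat r')) + (int n + 1) * q'"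
      by (simp add: algebra_simps)
    then show ?thesis unfolding d2l_decomp M_def[symmetric] q_def[symmetric] q'_def[symmetric]
      r_def[symmetric] r'_def[symmetric] by simp
  qed
next
  fix i :: int
  have e0: "i + int m + 1 = i + 1 * (int m + 1)" by simp
  have a: "(i + int m + 1) mod (int m + 1) = i mod (int m + 1)"
    unfolding e0 by (simp only: mod_mult_self1)
  have b: "(i + int m + 1) div (int m + 1) = i div (int m + 1) + 1"
    unfolding e0 by (simp only: div_mult_self1)
  show "delta_to_lambda m n g (i + int m + 1) = delta_to_lambda m n g i + int n + 1"
    unfolding d2l_decomp a b by (simp add: algebra_simps)
qed

lemma d2l_lam:
  assumes dm: "delta_mor m n g" shows "delta_to_lambda m n g \<in> lam_hom m n"
proof -
  have "g 0 \<le> n" using dm unfolding delta_mor_def by auto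
  then show ?thesis using d2l_emap[OF dm] by (simp add: lam_hom_iff delta_to_lambda_def)
qed

lemma d2l_nat: "r \<le> m \<Longrightarrow> delta_to_lambda m n g (int r) = int (g r)"
  by (simp add: delta_to_lambda_def)

lemma d2l_pre:
  assumes dm: "delta_mor m n g" and i: "i \<le> n"
  shows "delta_to_lambda m n g l = int i \<longleftrightarrow> 0 \<le> l \<and> l \<le> int m \<and> g (nat l) = i"
proof
  assume h: "delta_to_lambda m n g l = int i"
  define M where "M = int m + 1"
  have M: "0 < M" unfolding M_def by simp
  define q where "q = l div M"
  define r where "r = l mod M"
  have r0: "0 \<le> r" "r < M" unfolding r_def using M by simp_all
  have la: "l = q * M + r" unfolding q_def r_def by simp
  have rm: "nat r \<le> m" using r0 unfolding M_def by auto
  have gb: "g (nat r) \<le> n" using dm rm unfolding delta_mor_def by auto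
  have hv: "int (g (nat r)) + (int n + 1) * q = int i"
    using h unfolding d2l_decomp M_def[symmetric] q_def[symmetric] r_def[symmetric] .
  have q0: "q = 0"
  proof (rule ccontr)
    assume "q \<noteq> 0"
    then have "q \<ge> 1 \<or> q \<le> -1" by linarith
    then show False
    proof
      assume "q \<ge> 1"
      then have "(int n + 1) * q \<ge> (int n + 1) * 1" by (intro mult_left_mono) auto
      then have "(int n + 1) * q \<ge> int n + 1" by simp
      moreover have "int i \<le> int n" using i by simp
      ultimately show False using hv by linarith
    next
      assume "q \<le> -1"
      then have "(int n + 1) * q \<le> (int n + 1) * (-1)" by (intro mult_left_mono) auto
      then have "(int n + 1) * q \<le> - (int n + 1)" by simp
      moreover have "int (g (nat r)) \<le> int n" using gb by simp
      ultimately show False using hv by linarith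
    qed
  qed
  then have "l = r" using la by simp
  then show "0 \<le> l \<and> l \<le> int m \<and> g (nat l) = i" using r0 hv q0 unfolding M_def by auto
next
  assume "0 \<le> l \<and> l \<le> int m \<and> g (nat l) = i"
  then show "delta_to_lambda m n g l = int i"
    using d2l_nat[of "nat l" m n g] by (auto simp: nat_le_iff)
qed

lemma hits_d2l:
  assumes dm: "delta_mor m n g" and i: "i \<le> n"
  shows "hits (delta_to_lambda m n g) (int i) \<longleftrightarrow> i \<in> g ` {0..m}"
proof
  assume "hits (delta_to_lambda m n g) (int i)"
  then obtain l where "delta_to_lambda m n g l = int i" by (auto simp: hits_def)
  then have "0 \<le> l \<and> l \<le> int m \<and> g (nat l) = i" using d2l_pre[OF dm i] by blast
  then show "i \<in> g ` {0..m}" by (intro image_eqI[of _ _ "nat l"]) auto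
next
  assume "i \<in> g ` {0..m}"
  then obtain r where "r \<le> m" "g r = i" by auto
  then show "hits (delta_to_lambda m n g) (int i)" unfolding hits_def using d2l_nat by metis
qed

lemma ex1_iff_single: "(\<exists>!x. Q x) \<longleftrightarrow> (\<exists>x. {x. Q x} = {x})"
proof
  assume "\<exists>!x. Q x"
  then obtain x where "Q x" "\<And>y. Q y \<Longrightarrow> y = x" by blast
  then have "{x. Q x} = {x}" by blast
  then show "\<exists>x. {x. Q x} = {x}" by blast
next
  assume "\<exists>x. {x. Q x} = {x}"
  then obtain x where x: "{x. Q x} = {x}" by blast
  then have "Q x" by (metis mem_Collect_eq singletonI)
  moreover have "\<And>y. Q y \<Longrightarrow> y = x" using x by (metis mem_Collect_eq singletonD)
  ultimately show "\<exists>!x. Q x" by blast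
qed

lemma uniq_d2l:
  assumes dm: "delta_mor m n g" and i: "i \<le> n"
  shows "uniq (delta_to_lambda m n g) (int i) \<longleftrightarrow> card {r. r \<le> m \<and> g r = i} = 1"
proof -
  have pre: "{l. delta_to_lambda m n g l = int i} = int ` {r. r \<le> m \<and> g r = i}"
  proof (rule set_eqI)
    fix l
    show "l \<in> {l. delta_to_lambda m n g l = int i} \<longleftrightarrow> l \<in> int ` {r. r \<le> m \<and> g r = i}"
      using d2l_pre[OF dm i, of l] by (auto intro!: image_eqI[of _ _ "nat l"])
  qed
  have "card {l. delta_to_lambda m n g l = int i} = card {r. r \<le> m \<and> g r = i}"
    unfolding pre by (rule card_image) (simp add: inj_on_def)
  moreover have "uniq (delta_to_lambda m n g) (int i) \<longleftrightarrow> card {l. delta_to_lambda m n g l = int i} = 1"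
    unfolding uniq_def ex1_iff_single by (simp only: One_nat_def card_1_singleton_iff)
  ultimately show ?thesis by simp
qed

lemma uniq_shift:
  assumes e: "emap a b g" shows "uniq g (j + t * (int b + 1)) \<longleftrightarrow> uniq g j"
proof -
  have eq: "g l = j + t * (int b + 1) \<longleftrightarrow> g (l + (- t) * (int a + 1)) = j" for l
    using emap_shift[OF e, of l "- t"] by auto
  have bij: "bij (\<lambda>l. l + (- t) * (int a + 1))"
    by (rule bijI) (auto simp: inj_def image_def intro: exI[of _ "_ + t * (int a + 1)"])
  show ?thesis unfolding uniq_def
  proof
    assume "\<exists>!l. g l = j + t * (int b + 1)"
    then obtain l0 where l0: "g l0 = j + t * (int b + 1)" and u: "\<And>l. g l = j + t * (int b + 1) \<Longrightarrow> l = l0" by blast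
    show "\<exists>!l. g l = j"
    proof (rule ex1I[of _ "l0 + (- t) * (int a + 1)"])
      show "g (l0 + - t * (int a + 1)) = j" using eq l0 by blast
      fix l assume "g l = j"
      then have "g ((l + t * (int a + 1)) + (- t) * (int a + 1)) = j" by simp
      then have "l + t * (int a + 1) = l0" using eq u by blast
      then show "l = l0 + - t * (int a + 1)" by simp
    qed
  next
    assume "\<exists>!l. g l = j"
    then obtain l0 where l0: "g l0 = j" and u: "\<And>l. g l = j \<Longrightarrow> l = l0" by blast
    show "\<exists>!l. g l = j + t * (int b + 1)"
    proof (rule ex1I[of _ "l0 + t * (int a + 1)"])
      show "g (l0 + t * (int a + 1)) = j + t * (int b + 1)" using emap_shift[OF e] l0 by simp
      fix l assume "g l = j + t * (int b + 1)"
      then have "l + (- t) * (int a + 1) = l0" using eq u by blast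
      then show "l = l0 + t * (int a + 1)" by simp
    qed
  qed
qed

definition card_fib :: "('s \<Rightarrow> nat) \<Rightarrow> ('s \<Rightarrow> nat \<Rightarrow> nat) \<Rightarrow> 's \<Rightarrow> nat \<Rightarrow> nat" where
  "card_fib m f s i = card {j. j \<le> m s \<and> f s j = i}"

definition PC :: "nat \<Rightarrow> ('s \<Rightarrow> nat) \<Rightarrow> ('s \<Rightarrow> nat \<Rightarrow> nat) \<Rightarrow> 's \<Rightarrow> 's \<Rightarrow> bool" where
  "PC n m f s s' \<longleftrightarrow>
     (\<forall>i\<le>n. card_fib m f s i = 1 \<or> card_fib m f s' i = 1) \<and>
     (\<forall>i. 0 < i \<and> i \<le> n \<longrightarrow> {i - 1, i} \<subseteq> f s ` {0..m s} \<or> {i - 1, i} \<subseteq> f s' ` {0..m s'}) \<and>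
     ({0, n} \<subseteq> f s ` {0..m s} \<or> {0, n} \<subseteq> f s' ` {0..m s'})"

lemma reduce_j:
  fixes j :: int obtains i t where "i \<le> n" "j = int i + t * (int n + 1)"
proof -
  define i where "i = nat (j mod (int n + 1))"
  have b: "0 \<le> j mod (int n + 1)" by simp
  have b2: "j mod (int n + 1) \<le> int n" using pos_mod_bound[of "int n + 1" j] by linarith
  have "i \<le> n" unfolding i_def using b2 by (simp add: nat_le_iff)
  moreover have "int i = j mod (int n + 1)" unfolding i_def using b by simp
  moreover have "j = j mod (int n + 1) + (j div (int n + 1)) * (int n + 1)"
    using div_mult_mod_eq[of j "int n + 1"] by simp
  ultimately show ?thesis using that by simp
qed

lemma ZC_of_PC:
  assumes da: "delta_mor (m s) n (f s)" and db: "delta_mor (m s') n (f s')" and pc: "PC n m f s s'"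
  shows "ZC (delta_to_lambda (m s) n (f s)) (delta_to_lambda (m s') n (f s'))"
  unfolding ZC_def
proof (intro allI conjI)
  let ?ga = "delta_to_lambda (m s) n (f s)" and ?gb = "delta_to_lambda (m s') n (f s')"
  have ea: "emap (m s) n ?ga" by (rule d2l_emap[OF da])
  have eb: "emap (m s') n ?gb" by (rule d2l_emap[OF db])
  fix j :: int
  obtain i t where i: "i \<le> n" and j: "j = int i + t * (int n + 1)" by (rule reduce_j)
  have ua: "uniq ?ga j \<longleftrightarrow> card_fib m f s i = 1"
    unfolding j uniq_shift[OF ea] uniq_d2l[OF da i] card_fib_def ..
  have ub: "uniq ?gb j \<longleftrightarrow> card_fib m f s' i = 1"
    unfolding j uniq_shift[OF eb] uniq_d2l[OF db i] card_fib_def ..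
  show "uniq ?ga j \<or> uniq ?gb j"
    using pc i unfolding ua ub PC_def by blast
  have ha: "hits ?ga j \<longleftrightarrow> i \<in> f s ` {0..m s}"
    unfolding j hits_shift[OF ea] hits_d2l[OF da i] ..
  have hb: "hits ?gb j \<longleftrightarrow> i \<in> f s' ` {0..m s'}"
    unfolding j hits_shift[OF eb] hits_d2l[OF db i] ..
  show "(hits ?ga (j - 1) \<and> hits ?ga j) \<or> (hits ?gb (j - 1) \<and> hits ?gb j)"
  proof (cases "i = 0")
    case False
    then have i1: "i - 1 \<le> n" and ji: "j - 1 = int (i - 1) + t * (int n + 1)" using i j by auto
    have ha1: "hits ?ga (j - 1) \<longleftrightarrow> i - 1 \<in> f s ` {0..m s}"
      unfolding ji hits_shift[OF ea] hits_d2l[OF da i1] ..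
    have hb1: "hits ?gb (j - 1) \<longleftrightarrow> i - 1 \<in> f s' ` {0..m s'}"
      unfolding ji hits_shift[OF eb] hits_d2l[OF db i1] ..
    have "{i - 1, i} \<subseteq> f s ` {0..m s} \<or> {i - 1, i} \<subseteq> f s' ` {0..m s'}"
      using pc i False unfolding PC_def by blast
    then show ?thesis unfolding ha hb ha1 hb1 by blast
  next
    case True
    then have ji: "j - 1 = int n + (t - 1) * (int n + 1)"
      using j by (simp add: algebra_simps)
    have ha1: "hits ?ga (j - 1) \<longleftrightarrow> n \<in> f s ` {0..m s}"
      unfolding ji hits_shift[OF ea] hits_d2l[OF da order_refl] ..
    have hb1: "hits ?gb (j - 1) \<longleftrightarrow> n \<in> f s' ` {0..m s'}"
      unfolding ji hits_shift[OF eb] hits_d2l[OF db order_refl] ..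
    have "{0, n} \<subseteq> f s ` {0..m s} \<or> {0, n} \<subseteq> f s' ` {0..m s'}"
      using pc unfolding PC_def by blast
    then show ?thesis unfolding ha hb ha1 hb1 using True by blast
  qed
qed

lemma PC_of_ZC:
  assumes da: "delta_mor (m s) n (f s)" and db: "delta_mor (m s') n (f s')"
    and zc: "ZC (delta_to_lambda (m s) n (f s)) (delta_to_lambda (m s') n (f s'))"
  shows "PC n m f s s'"
  unfolding PC_def
proof (intro conjI allI impI)
  let ?ga = "delta_to_lambda (m s) n (f s)" and ?gb = "delta_to_lambda (m s') n (f s')"
  have ea: "emap (m s) n ?ga" by (rule d2l_emap[OF da])
  have eb: "emap (m s') n ?gb" by (rule d2l_emap[OF db])
  fix i assume i: "i \<le> n"
  show "card_fib m f s i = 1 \<or> card_fib m f s' i = 1"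
    using zc uniq_d2l[OF da i] uniq_d2l[OF db i] unfolding ZC_def card_fib_def by blast
next
  let ?ga = "delta_to_lambda (m s) n (f s)" and ?gb = "delta_to_lambda (m s') n (f s')"
  fix i assume i: "0 < i \<and> i \<le> n"
  then have i0: "i \<le> n" and i1: "i - 1 \<le> n" and ji: "int i - 1 = int (i - 1)" by auto
  have "(hits ?ga (int i - 1) \<and> hits ?ga (int i)) \<or> (hits ?gb (int i - 1) \<and> hits ?gb (int i))"
    using zc unfolding ZC_def by blast
  then show "{i - 1, i} \<subseteq> f s ` {0..m s} \<or> {i - 1, i} \<subseteq> f s' ` {0..m s'}"
    unfolding ji hits_d2l[OF da i0] hits_d2l[OF db i0] hits_d2l[OF da i1] hits_d2l[OF db i1] by auto
next
  let ?ga = "delta_to_lambda (m s) n (f s)" and ?gb = "delta_to_lambda (m s') n (f s')"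
  have ea: "emap (m s) n ?ga" by (rule d2l_emap[OF da])
  have eb: "emap (m s') n ?gb" by (rule d2l_emap[OF db])
  have "(hits ?ga (0 - 1) \<and> hits ?ga 0) \<or> (hits ?gb (0 - 1) \<and> hits ?gb 0)"
    using zc unfolding ZC_def by blast
  moreover have "(0::int) - 1 = int n + (-1) * (int n + 1)" "(0::int) = int 0" by simp_all
  ultimately have "(hits ?ga (int n) \<and> hits ?ga (int 0)) \<or> (hits ?gb (int n) \<and> hits ?gb (int 0))"
    using hits_shift[OF ea, of "int n" "-1"] hits_shift[OF eb, of "int n" "-1"] by simp
  then show "{0, n} \<subseteq> f s ` {0..m s} \<or> {0, n} \<subseteq> f s' ` {0..m s'}"
    unfolding hits_d2l[OF da order_refl] hits_d2l[OF db order_refl] hits_d2l[OF da zero_le]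
      hits_d2l[OF db zero_le] by auto
qed

lemma card_le1_iff:
  assumes "finite S"
  shows "card {s\<in>S. Q s} \<le> 1 \<longleftrightarrow> (\<forall>s\<in>S. \<forall>s'\<in>S. s \<noteq> s' \<longrightarrow> \<not> (Q s \<and> Q s'))"
proof
  assume c: "card {s\<in>S. Q s} \<le> 1"
  show "\<forall>s\<in>S. \<forall>s'\<in>S. s \<noteq> s' \<longrightarrow> \<not> (Q s \<and> Q s')"
  proof (intro ballI impI notI)
    fix s s' assume "s \<in> S" "s' \<in> S" "s \<noteq> s'" "Q s \<and> Q s'"
    then have "{s, s'} \<subseteq> {s\<in>S. Q s}" by auto
    then have "card {s, s'} \<le> card {s\<in>S. Q s}" using assms by (intro card_mono) auto
    then show False using c \<open>s \<noteq> s'\<close> by simp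
  qed
next
  assume h: "\<forall>s\<in>S. \<forall>s'\<in>S. s \<noteq> s' \<longrightarrow> \<not> (Q s \<and> Q s')"
  have fin: "finite {s\<in>S. Q s}" using assms by simp
  have "card {s\<in>S. Q s} \<le> Suc 0 \<longleftrightarrow> (\<forall>a\<in>{s\<in>S. Q s}. \<forall>b\<in>{s\<in>S. Q s}. a = b)"
    by (rule card_le_Suc0_iff_eq[OF fin])
  then show "card {s\<in>S. Q s} \<le> 1" using h by auto
qed

lemma cyc_iff_PC:
  assumes fin: "finite S"
  shows "cyclically_compatible S n m f \<longleftrightarrow> (\<forall>s\<in>S. \<forall>s'\<in>S. s \<noteq> s' \<longrightarrow> PC n m f s s')"
proof
  assume c: "cyclically_compatible S n m f"
  have c1: "\<And>i. i \<le> n \<Longrightarrow> card {s\<in>S. card_fib m f s i \<noteq> 1} \<le> 1"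
    using c unfolding cyclically_compatible_def compatible_def card_fib_def by blast
  have c2: "\<And>i. 0 < i \<and> i \<le> n \<Longrightarrow> card {s\<in>S. \<not> {i - 1, i} \<subseteq> f s ` {0..m s}} \<le> 1"
    using c unfolding cyclically_compatible_def compatible_def by blast
  have c3: "card {s\<in>S. \<not> {0, n} \<subseteq> f s ` {0..m s}} \<le> 1"
    using c unfolding cyclically_compatible_def by blast
  show "\<forall>s\<in>S. \<forall>s'\<in>S. s \<noteq> s' \<longrightarrow> PC n m f s s'"
  proof (intro ballI impI)
    fix s s' assume ss: "s \<in> S" "s' \<in> S" "s \<noteq> s'"
    show "PC n m f s s'" unfolding PC_def
    proof (intro conjI allI impI)
      fix i assume i: "i \<le> n"
      show "card_fib m f s i = 1 \<or> card_fib m f s' i = 1"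
        using c1[OF i] ss unfolding card_le1_iff[OF fin] by blast
    next
      fix i assume i: "0 < i \<and> i \<le> n"
      show "{i - 1, i} \<subseteq> f s ` {0..m s} \<or> {i - 1, i} \<subseteq> f s' ` {0..m s'}"
        using c2[OF i] ss unfolding card_le1_iff[OF fin] by blast
    next
      show "{0, n} \<subseteq> f s ` {0..m s} \<or> {0, n} \<subseteq> f s' ` {0..m s'}"
        using c3 ss unfolding card_le1_iff[OF fin] by blast
    qed
  qed
next
  assume H: "\<forall>s\<in>S. \<forall>s'\<in>S. s \<noteq> s' \<longrightarrow> PC n m f s s'"
  have H1: "\<And>s s' i. s \<in> S \<Longrightarrow> s' \<in> S \<Longrightarrow> s \<noteq> s' \<Longrightarrow> i \<le> n \<Longrightarrow>
      card_fib m f s i = 1 \<or> card_fib m f s' i = 1" using H unfolding PC_def by blast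
  have H2: "\<And>s s' i. s \<in> S \<Longrightarrow> s' \<in> S \<Longrightarrow> s \<noteq> s' \<Longrightarrow> 0 < i \<and> i \<le> n \<Longrightarrow>
      {i - 1, i} \<subseteq> f s ` {0..m s} \<or> {i - 1, i} \<subseteq> f s' ` {0..m s'}" using H unfolding PC_def by blast
  have H3: "\<And>s s'. s \<in> S \<Longrightarrow> s' \<in> S \<Longrightarrow> s \<noteq> s' \<Longrightarrow>
      {0, n} \<subseteq> f s ` {0..m s} \<or> {0, n} \<subseteq> f s' ` {0..m s'}" using H unfolding PC_def by blast
  show "cyclically_compatible S n m f"
    unfolding cyclically_compatible_def compatible_def
  proof (intro conjI allI impI)
    fix i assume i: "i \<le> n"
    show "card {s\<in>S. card {j. j \<le> m s \<and> f s j = i} \<noteq> 1} \<le> 1"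
      unfolding card_le1_iff[OF fin] using H1[OF _ _ _ i] unfolding card_fib_def by blast
  next
    fix i assume i: "0 < i \<and> i \<le> n"
    show "card {s\<in>S. \<not> {i - 1, i} \<subseteq> f s ` {0..m s}} \<le> 1"
      unfolding card_le1_iff[OF fin] using H2[OF _ _ _ i] by blast
  next
    show "card {s\<in>S. \<not> {0, n} \<subseteq> f s ` {0..m s}} \<le> 1"
      unfolding card_le1_iff[OF fin] using H3 by blast
  qed
qed

lemma square_Z:
  assumes LP: "lam_pullback P A B C pa pb ga gb"
  shows "\<exists>k. ga \<circ> pa = gb \<circ> sh B k pb \<and> ZPB P A B C pa (sh B k pb) ga gb \<and>
    PHI pa (sh B k pb) ga gb \<and> emap P A pa \<and> emap P B (sh B k pb) \<and> emap A C ga \<and> emap B C gb"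
proof -
  have h: "pa \<in> lam_hom P A" "pb \<in> lam_hom P B" "ga \<in> lam_hom A C" "gb \<in> lam_hom B C"
    and c: "lam_comp C ga pa = lam_comp C gb pb"
    using LP unfolding lam_pullback_def by blast+
  have e: "emap P A pa" "emap P B pb" "emap A C ga" "emap B C gb" using h by (simp_all add: lam_hom_iff)
  obtain k where E: "ga \<circ> pa = gb \<circ> sh B k pb" using commute_shift[OF c e(4)] by blast
  have Z: "ZPB P A B C pa (sh B k pb) ga gb" by (rule R1[OF LP E])
  have e2: "emap P B (sh B k pb)" by (rule emap_sh[OF e(2)])
  have "PHI pa (sh B k pb) ga gb" by (rule PHI_of_ZPB[OF Z e(1) e2 e(3) e(4) E])
  then show ?thesis using E Z e e2 by blast
qed

lemma square_PO:
  assumes LP: "lam_pullback P A B C pa pb ga gb" and zc: "ZC ga gb"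
  shows "lam_pushout P A B C pa pb ga gb"
proof -
  have h: "pa \<in> lam_hom P A" "pb \<in> lam_hom P B" "ga \<in> lam_hom A C" "gb \<in> lam_hom B C"
    using LP unfolding lam_pullback_def by blast+
  obtain k where E: "ga \<circ> pa = gb \<circ> sh B k pb" and H: "PHI pa (sh B k pb) ga gb"
    and e: "emap P A pa" "emap P B (sh B k pb)" "emap A C ga" "emap B C gb"
    using square_Z[OF LP] by blast
  have surj: "\<And>k1 k2. ga k1 = gb k2 \<Longrightarrow> \<exists>p. pa p = k1 \<and> sh B k pb p = k2"
    using H unfolding PHI_def by blast
  have "ZPO P A B C pa (sh B k pb) ga gb" by (rule ZPO_of_ZC[OF e surj zc])
  then show ?thesis by (rule R4[OF h E])
qed

lemma square_ZC:
  assumes LP: "lam_pullback P A B C pa pb ga gb" and LO: "lam_pushout P A B C pa pb ga gb"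
  shows "ZC ga gb"
proof -
  obtain k where E: "ga \<circ> pa = gb \<circ> sh B k pb" and Z: "ZPB P A B C pa (sh B k pb) ga gb"
    and e: "emap P A pa" "emap P B (sh B k pb)" "emap A C ga" "emap B C gb"
    using square_Z[OF LP] by blast
  have "ZPO P A B C pa (sh B k pb) ga gb" by (rule R3[OF LO E])
  then show ?thesis using ZC_of_square[OF Z _ e E] by blast
qed

lemma face_pb:
  assumes "strongly_cartesian S Qo Qm" "T \<subseteq> S" "s \<in> S" "s' \<in> S" "s \<noteq> s'" "s \<notin> T" "s' \<notin> T"
  shows "lam_pullback (Qo (insert s (insert s' T))) (Qo (insert s T)) (Qo (insert s' T)) (Qo T)
          (Qm (insert s T) (insert s (insert s' T))) (Qm (insert s' T) (insert s (insert s' T)))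
          (Qm T (insert s T)) (Qm T (insert s' T))"
  using assms unfolding strongly_cartesian_def by blast

lemma cube_ZC:
  assumes fin: "finite S" and sc: "strongly_cartesian S Qo Qm"
    and base: "\<And>s s'. s \<in> S \<Longrightarrow> s' \<in> S \<Longrightarrow> s \<noteq> s' \<Longrightarrow> ZC (Qm {} {s}) (Qm {} {s'})"
    and T: "T \<subseteq> S"
  shows "\<forall>s\<in>S - T. \<forall>s'\<in>S - T. s \<noteq> s' \<longrightarrow> ZC (Qm T (insert s T)) (Qm T (insert s' T))"
proof -
  have finT: "finite T" using fin T by (rule rev_finite_subset)
  show ?thesis using finT T
  proof (induction T rule: finite_subset_induct')
    case empty
    then show ?case using base by simp
  next
    case (insert a T)
    show ?case
    proof (intro ballI impI)
      fix s s' assume s: "s \<in> S - insert a T" and s': "s' \<in> S - insert a T" and ne: "s \<noteq> s'"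
      have as: "a \<noteq> s" "a \<noteq> s'" using s s' by auto
      have F1: "lam_pullback (Qo (insert a (insert s T))) (Qo (insert a T)) (Qo (insert s T)) (Qo T)
          (Qm (insert a T) (insert a (insert s T))) (Qm (insert s T) (insert a (insert s T)))
          (Qm T (insert a T)) (Qm T (insert s T))"
        by (rule face_pb[OF sc]) (use insert s as in auto)
      have F2: "lam_pullback (Qo (insert a (insert s' T))) (Qo (insert a T)) (Qo (insert s' T)) (Qo T)
          (Qm (insert a T) (insert a (insert s' T))) (Qm (insert s' T) (insert a (insert s' T)))
          (Qm T (insert a T)) (Qm T (insert s' T))"
        by (rule face_pb[OF sc]) (use insert s' as in auto)
      obtain k1 where H1: "PHI (Qm (insert a T) (insert a (insert s T)))
          (sh (Qo (insert s T)) k1 (Qm (insert s T) (insert a (insert s T))))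
          (Qm T (insert a T)) (Qm T (insert s T))"
        and ega: "emap (Qo (insert a T)) (Qo T) (Qm T (insert a T))"
        using square_Z[OF F1] by blast
      obtain k2 where H2: "PHI (Qm (insert a T) (insert a (insert s' T)))
          (sh (Qo (insert s' T)) k2 (Qm (insert s' T) (insert a (insert s' T))))
          (Qm T (insert a T)) (Qm T (insert s' T))"
        using square_Z[OF F2] by blast
      have z1: "ZC (Qm T (insert a T)) (Qm T (insert s T))"
        using insert.IH s as insert.hyps by auto
      have z2: "ZC (Qm T (insert s T)) (Qm T (insert s' T))"
        using insert.IH s s' ne by auto
      have "ZC (Qm (insert a T) (insert a (insert s T))) (Qm (insert a T) (insert a (insert s' T)))"
        by (rule transfer[OF ega z1 z2 H1 H2])
      then show "ZC (Qm (insert a T) (insert s (insert a T))) (Qm (insert a T) (insert s' (insert a T)))"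
        by (simp add: insert_commute)
    qed
  qed
qed

lemma cube_cocart:
  assumes fin: "finite S" and sc: "strongly_cartesian S Qo Qm"
    and base: "\<And>s s'. s \<in> S \<Longrightarrow> s' \<in> S \<Longrightarrow> s \<noteq> s' \<Longrightarrow> ZC (Qm {} {s}) (Qm {} {s'})"
  shows "strongly_cocartesian S Qo Qm"
  unfolding strongly_cocartesian_def
proof (intro allI impI)
  fix T s s' assume h: "T \<subseteq> S \<and> s \<in> S \<and> s' \<in> S \<and> s \<noteq> s' \<and> s \<notin> T \<and> s' \<notin> T"
  have LP: "lam_pullback (Qo (insert s (insert s' T))) (Qo (insert s T)) (Qo (insert s' T)) (Qo T)
          (Qm (insert s T) (insert s (insert s' T))) (Qm (insert s' T) (insert s (insert s' T)))
          (Qm T (insert s T)) (Qm T (insert s' T))"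
    using face_pb[OF sc] h by blast
  have "ZC (Qm T (insert s T)) (Qm T (insert s' T))"
    using cube_ZC[OF fin sc base] h by blast
  then show "lam_pushout (Qo (insert s (insert s' T))) (Qo (insert s T)) (Qo (insert s' T)) (Qo T)
          (Qm (insert s T) (insert s (insert s' T))) (Qm (insert s' T) (insert s (insert s' T)))
          (Qm T (insert s T)) (Qm T (insert s' T))"
    by (rule square_PO[OF LP])
qed

lemma base_ZC:
  assumes ext: "extends_claw S n m f Qo Qm" and dm: "\<forall>s\<in>S. delta_mor (m s) n (f s)"
    and pc: "\<forall>s\<in>S. \<forall>s'\<in>S. s \<noteq> s' \<longrightarrow> PC n m f s s'"
  shows "\<And>s s'. s \<in> S \<Longrightarrow> s' \<in> S \<Longrightarrow> s \<noteq> s' \<Longrightarrow> ZC (Qm {} {s}) (Qm {} {s'})"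
proof -
  fix s s' assume ss: "s \<in> S" "s' \<in> S" "s \<noteq> s'"
  have "Qm {} {s} = delta_to_lambda (m s) n (f s)" "Qm {} {s'} = delta_to_lambda (m s') n (f s')"
    using ext ss unfolding extends_claw_def by auto
  then show "ZC (Qm {} {s}) (Qm {} {s'})" using ZC_of_PC[of m s n f s'] dm pc ss by simp
qed

lemma forward_dir:
  assumes fin: "finite S" and dm: "\<forall>s\<in>S. delta_mor (m s) n (f s)"
    and ext: "extends_claw S n m f Qo Qm" and sc: "strongly_cartesian S Qo Qm"
    and co: "strongly_cocartesian S Qo Qm"
  shows "cyclically_compatible S n m f"
  unfolding cyc_iff_PC[OF fin]
proof (intro ballI impI)
  fix s s' assume ss: "s \<in> S" "s' \<in> S" "s \<noteq> s'"
  have LP: "lam_pullback (Qo (insert s (insert s' {}))) (Qo (insert s {})) (Qo (insert s' {})) (Qo {})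
          (Qm (insert s {}) (insert s (insert s' {}))) (Qm (insert s' {}) (insert s (insert s' {})))
          (Qm {} (insert s {})) (Qm {} (insert s' {}))"
    using sc ss unfolding strongly_cartesian_def by blast
  have LO: "lam_pushout (Qo (insert s (insert s' {}))) (Qo (insert s {})) (Qo (insert s' {})) (Qo {})
          (Qm (insert s {}) (insert s (insert s' {}))) (Qm (insert s' {}) (insert s (insert s' {})))
          (Qm {} (insert s {})) (Qm {} (insert s' {}))"
    using co ss unfolding strongly_cocartesian_def by blast
  have z: "ZC (Qm {} {s}) (Qm {} {s'})" using square_ZC[OF LP LO] by simp
  have "Qm {} {s} = delta_to_lambda (m s) n (f s)" "Qm {} {s'} = delta_to_lambda (m s') n (f s')"
    using ext ss unfolding extends_claw_def by auto
  then show "PC n m f s s'" using PC_of_ZC[of m s n f s'] z dm ss by simp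
qed

lemma d2l_cong:
  assumes "\<And>r. r \<le> a \<Longrightarrow> g r = g' r"
  shows "delta_to_lambda a b g = delta_to_lambda a b g'"
proof (rule ext)
  fix l :: int
  have "nat (l mod (int a + 1)) \<le> a"
    using pos_mod_bound[of "int a + 1" l] pos_mod_sign[of "int a + 1" l] by linarith
  then show "delta_to_lambda a b g l = delta_to_lambda a b g' l"
    unfolding delta_to_lambda_def using assms by simp
qed

lemma d2l_id: "delta_to_lambda a a (\<lambda>r. r) = id"
proof (rule ext)
  fix l :: int
  have "0 \<le> l mod (int a + 1)" by simp
  then have "int (nat (l mod (int a + 1))) = l mod (int a + 1)" by simp
  then show "delta_to_lambda a a (\<lambda>r. r) l = id l"
    unfolding delta_to_lambda_def using div_mult_mod_eq[of l "int a + 1"] by (simp add: algebra_simps)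
qed

lemma d2l_comp:
  assumes dh: "delta_mor a b h" and dg: "delta_mor b c g"
  shows "delta_to_lambda b c g \<circ> delta_to_lambda a b h = delta_to_lambda a c (g \<circ> h)"
proof (rule ext)
  fix l :: int
  define M where "M = int a + 1"
  define q where "q = l div M"
  define r where "r = nat (l mod M)"
  have rm: "r \<le> a" unfolding r_def M_def
    using pos_mod_bound[of "int a + 1" l] pos_mod_sign[of "int a + 1" l] by linarith
  have hb: "h r \<le> b" using dh rm unfolding delta_mor_def by auto
  have l1: "delta_to_lambda a b h l = int (h r) + q * (int b + 1)"
    unfolding d2l_decomp q_def r_def M_def by (simp add: algebra_simps)
  have "delta_to_lambda b c g (int (h r) + q * (int b + 1)) = delta_to_lambda b c g (int (h r)) + q * (int c + 1)"
    by (rule emap_shift[OF d2l_emap[OF dg]])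
  also have "\<dots> = int (g (h r)) + q * (int c + 1)" using d2l_nat[OF hb] by simp
  also have "\<dots> = delta_to_lambda a c (g \<circ> h) l"
    unfolding d2l_decomp q_def r_def M_def by (simp add: algebra_simps)
  finally show "(delta_to_lambda b c g \<circ> delta_to_lambda a b h) l = delta_to_lambda a c (g \<circ> h) l"
    using l1 by simp
qed

lemma delta_mor_comp: "delta_mor a b h \<Longrightarrow> delta_mor b c g \<Longrightarrow> delta_mor a c (g \<circ> h)"
  unfolding delta_mor_def by auto

lemma lam_comp_d2l:
  assumes dh: "delta_mor a b h" and dg: "delta_mor b c g"
  shows "lam_comp c (delta_to_lambda b c g) (delta_to_lambda a b h) = delta_to_lambda a c (g \<circ> h)"
  unfolding lam_comp_nrm d2l_comp[OF dh dg]
  by (rule nrm_id[OF d2l_lam[OF delta_mor_comp[OF dh dg]]])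

lemma split_unique:
  fixes q q' :: int
  assumes "x \<le> C" "y \<le> C" "int x + q * (int C + 1) = int y + q' * (int C + 1)"
  shows "q = q' \<and> x = y"
proof -
  have "(q - q') * (int C + 1) = int y - int x" using assms(3) by (simp add: algebra_simps)
  moreover have "int y - int x < int C + 1" "- (int C + 1) < int y - int x" using assms(1,2) by linarith+
  ultimately have a: "(q - q') * (int C + 1) < 1 * (int C + 1)" "(-1) * (int C + 1) < (q - q') * (int C + 1)"
    by simp_all
  have "q - q' < 1" by (rule mult_right_less_imp_less[OF a(1)]) simp
  moreover have "-1 < q - q'" by (rule mult_right_less_imp_less[OF a(2)]) simp
  ultimately have "q = q'" by simp
  then show ?thesis using assms(3) by simp
qed

lemma d2l_split:
  obtains q r where "r \<le> a" "l = int r + q * (int a + 1)"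
    "delta_to_lambda a b g l = int (g r) + q * (int b + 1)"
proof -
  define q where "q = l div (int a + 1)"
  define r where "r = nat (l mod (int a + 1))"
  have rm: "r \<le> a" unfolding r_def
    using pos_mod_bound[of "int a + 1" l] pos_mod_sign[of "int a + 1" l] by linarith
  have "int r = l mod (int a + 1)" unfolding r_def using pos_mod_sign[of "int a + 1" l] by simp
  then have "l = int r + q * (int a + 1)" unfolding q_def using div_mult_mod_eq[of l "int a + 1"] by simp
  moreover have "delta_to_lambda a b g l = int (g r) + q * (int b + 1)"
    unfolding d2l_decomp q_def r_def by (simp add: algebra_simps)
  ultimately show ?thesis using that rm by blast
qed

lemma d2l_at: "r \<le> a \<Longrightarrow> delta_to_lambda a b g (int r + q * (int a + 1)) = int (g r) + q * (int b + 1)"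
proof -
  assume ra: "r \<le> a"
  obtain q' r' where h: "r' \<le> a" "int r + q * (int a + 1) = int r' + q' * (int a + 1)"
    "delta_to_lambda a b g (int r + q * (int a + 1)) = int (g r') + q' * (int b + 1)"
    by (rule d2l_split)
  then have "q = q' \<and> r = r'" using split_unique[OF ra h(1) h(2)] by simp
  then show ?thesis using h(3) by simp
qed

lemma PHI_d2l:
  assumes dpa: "delta_mor P A pa" and dpb: "delta_mor P B pb"
    and dha: "delta_mor A C ha" and dhb: "delta_mor B C hb"
    and comm: "\<And>p. p \<le> P \<Longrightarrow> ha (pa p) = hb (pb p)"
    and surj: "\<And>k k'. k \<le> A \<Longrightarrow> k' \<le> B \<Longrightarrow> ha k = hb k' \<Longrightarrow> \<exists>p\<le>P. pa p = k \<and> pb p = k'"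
    and inj: "\<And>p p'. p \<le> P \<Longrightarrow> p' \<le> P \<Longrightarrow> pa p = pa p' \<Longrightarrow> pb p = pb p' \<Longrightarrow> p = p'"
  shows "PHI (delta_to_lambda P A pa) (delta_to_lambda P B pb) (delta_to_lambda A C ha) (delta_to_lambda B C hb)"
  unfolding PHI_def
proof (intro conjI allI impI)
  have "delta_to_lambda A C ha \<circ> delta_to_lambda P A pa = delta_to_lambda P C (ha \<circ> pa)"
    by (rule d2l_comp[OF dpa dha])
  also have "\<dots> = delta_to_lambda P C (hb \<circ> pb)" by (rule d2l_cong) (simp add: comm)
  also have "\<dots> = delta_to_lambda B C hb \<circ> delta_to_lambda P B pb" by (rule d2l_comp[OF dpb dhb, symmetric])
  finally show "delta_to_lambda A C ha \<circ> delta_to_lambda P A pa = delta_to_lambda B C hb \<circ> delta_to_lambda P B pb" .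
next
  fix k k' assume e: "delta_to_lambda A C ha k = delta_to_lambda B C hb k'"
  obtain q r where r: "r \<le> A" "k = int r + q * (int A + 1)" "delta_to_lambda A C ha k = int (ha r) + q * (int C + 1)"
    by (rule d2l_split)
  obtain q' r' where r': "r' \<le> B" "k' = int r' + q' * (int B + 1)" "delta_to_lambda B C hb k' = int (hb r') + q' * (int C + 1)"
    by (rule d2l_split)
  have "ha r \<le> C" "hb r' \<le> C" using dha dhb r(1) r'(1) unfolding delta_mor_def by auto
  then have qq: "q = q' \<and> ha r = hb r'" using split_unique e r(3) r'(3) by metis
  then obtain p where p: "p \<le> P" "pa p = r" "pb p = r'" using surj[OF r(1) r'(1)] by blast
  have "delta_to_lambda P A pa (int p + q * (int P + 1)) = k" using d2l_at[OF p(1)] p r by simp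
  moreover have "delta_to_lambda P B pb (int p + q * (int P + 1)) = k'" using d2l_at[OF p(1)] p r' qq by simp
  ultimately show "\<exists>p. delta_to_lambda P A pa p = k \<and> delta_to_lambda P B pb p = k'" by blast
next
  fix p p' assume e1: "delta_to_lambda P A pa p = delta_to_lambda P A pa p'"
    and e2: "delta_to_lambda P B pb p = delta_to_lambda P B pb p'"
  obtain q r where r: "r \<le> P" "p = int r + q * (int P + 1)" by (rule d2l_split)
  obtain q' r' where r': "r' \<le> P" "p' = int r' + q' * (int P + 1)" by (rule d2l_split)
  have a1: "pa r \<le> A" "pa r' \<le> A" "pb r \<le> B" "pb r' \<le> B"
    using dpa dpb r(1) r'(1) unfolding delta_mor_def by auto
  have "int (pa r) + q * (int A + 1) = int (pa r') + q' * (int A + 1)"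
    using e1 d2l_at[OF r(1)] d2l_at[OF r'(1)] r(2) r'(2) by simp
  then have x: "q = q' \<and> pa r = pa r'" using split_unique a1(1,2) by metis
  have "int (pb r) + q * (int B + 1) = int (pb r') + q' * (int B + 1)"
    using e2 d2l_at[OF r(1)] d2l_at[OF r'(1)] r(2) r'(2) by simp
  then have y: "pb r = pb r'" using split_unique a1(3,4) by metis
  have "r = r'" using inj[OF r(1) r'(1)] x y by blast
  then show "p = p'" using r(2) r'(2) x by simp
qed

locale cclaw =
  fixes S :: "'s set" and n :: nat and m :: "'s \<Rightarrow> nat" and f :: "'s \<Rightarrow> nat \<Rightarrow> nat"
  assumes fin: "finite S" and dm: "\<forall>s\<in>S. delta_mor (m s) n (f s)"
    and pc: "\<forall>s\<in>S. \<forall>s'\<in>S. s \<noteq> s' \<longrightarrow> PC n m f s s'"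
begin

definition gam :: "'s set \<Rightarrow> nat \<Rightarrow> nat" where "gam T i = (\<Prod>s\<in>T. card_fib m f s i)"
definition off :: "'s set \<Rightarrow> nat \<Rightarrow> nat" where "off T i = (\<Sum>j<i. gam T j)"
definition tot :: "'s set \<Rightarrow> nat" where "tot T = off T (Suc n)"
definition Qo :: "'s set \<Rightarrow> nat" where "Qo T = tot T - 1"
definition blk :: "'s set \<Rightarrow> nat \<Rightarrow> nat" where "blk T r = (LEAST i. r < off T (Suc i))"
definition hm :: "'s set \<Rightarrow> 's set \<Rightarrow> nat \<Rightarrow> nat" where
  "hm T T' r = off T (blk T' r) + min (r - off T' (blk T' r)) (gam T (blk T' r) - 1)"
definition Qm :: "'s set \<Rightarrow> 's set \<Rightarrow> int \<Rightarrow> int" where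
  "Qm T T' = delta_to_lambda (Qo T') (Qo T) (hm T T')"

lemma dms: "s \<in> S \<Longrightarrow> delta_mor (m s) n (f s)" using dm by blast

lemma fs_le: "s \<in> S \<Longrightarrow> j \<le> m s \<Longrightarrow> f s j \<le> n" using dms unfolding delta_mor_def by blast

lemma fs_mono: "s \<in> S \<Longrightarrow> j \<le> j' \<Longrightarrow> j' \<le> m s \<Longrightarrow> f s j \<le> f s j'"
  using dms unfolding delta_mor_def by blast

lemma al_zero: "card_fib m f s i = 0 \<longleftrightarrow> i \<notin> f s ` {0..m s}"
proof -
  have "finite {j. j \<le> m s \<and> f s j = i}" by simp
  then have "card_fib m f s i = 0 \<longleftrightarrow> {j. j \<le> m s \<and> f s j = i} = {}" unfolding card_fib_def by simp
  also have "\<dots> \<longleftrightarrow> i \<notin> f s ` {0..m s}" by auto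
  finally show ?thesis .
qed

lemma finT: "T \<subseteq> S \<Longrightarrow> finite T" using fin by (rule rev_finite_subset)

lemma gam_zero: "T \<subseteq> S \<Longrightarrow> gam T i = 0 \<longleftrightarrow> (\<exists>s\<in>T. card_fib m f s i = 0)"
  unfolding gam_def using finT by simp

lemma off_Suc: "off T (Suc i) = off T i + gam T i" unfolding off_def by simp

lemma off_0: "off T 0 = 0" unfolding off_def by simp

lemma off_mono: "i \<le> i' \<Longrightarrow> off T i \<le> off T i'"
  unfolding off_def by (rule sum_mono2) auto

lemma miss_chain:
  assumes T: "T \<subseteq> S" and s0: "s0 \<in> S" and z0: "card_fib m f s0 0 = 0"
    and all: "\<forall>i\<le>n. \<exists>t\<in>T. card_fib m f t i = 0"
  shows "i \<le> n \<Longrightarrow> card_fib m f s0 i = 0"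
proof (induction i)
  case 0 show ?case by (rule z0)
next
  case (Suc i)
  then obtain t where t: "t \<in> T" "card_fib m f t (Suc i) = 0" using all by blast
  have ih: "card_fib m f s0 i = 0" using Suc by simp
  show ?case
  proof (cases "t = s0")
    case True then show ?thesis using t by simp
  next
    case False
    have "PC n m f s0 t" using pc s0 t T False by auto
    then have "{Suc i - 1, Suc i} \<subseteq> f s0 ` {0..m s0} \<or> {Suc i - 1, Suc i} \<subseteq> f t ` {0..m t}"
      unfolding PC_def using Suc.prems by blast
    then show ?thesis using ih t(2) unfolding al_zero by auto
  qed
qed

lemma tot_pos: assumes T: "T \<subseteq> S" shows "0 < tot T"
proof (rule ccontr)
  assume "\<not> 0 < tot T"
  then have "tot T = 0" by simp
  then have s0: "sum (gam T) {..<Suc n} = 0" unfolding tot_def off_def by simp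
  have z: "\<forall>i\<le>n. gam T i = 0"
  proof (intro allI impI)
    fix i assume "i \<le> n"
    then have "i \<in> {..<Suc n}" by simp
    then show "gam T i = 0" using s0 sum_eq_0_iff[of "{..<Suc n}" "gam T"] by blast
  qed
  then have all: "\<forall>i\<le>n. \<exists>t\<in>T. card_fib m f t i = 0" using gam_zero[OF T] by blast
  then obtain s0 where s0: "s0 \<in> T" "card_fib m f s0 0 = 0" by blast
  have s0S: "s0 \<in> S" using s0 T by blast
  have miss: "\<And>i. i \<le> n \<Longrightarrow> card_fib m f s0 i = 0" by (rule miss_chain[OF T s0S s0(2) all])
  have "f s0 0 \<le> n" by (rule fs_le[OF s0S]) simp
  then have "card_fib m f s0 (f s0 0) = 0" by (rule miss)
  then have "f s0 0 \<notin> f s0 ` {0..m s0}" using al_zero[of s0 "f s0 0"] by blast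
  moreover have "f s0 0 \<in> f s0 ` {0..m s0}" by simp
  ultimately show False by blast
qed

lemma Qo_tot: assumes T: "T \<subseteq> S" shows "r \<le> Qo T \<longleftrightarrow> r < tot T"
proof -
  have "0 < tot T" by (rule tot_pos[OF T])
  then show ?thesis unfolding Qo_def by arith
qed

lemma blk_props:
  assumes r: "r < tot T"
  shows "blk T r \<le> n" "off T (blk T r) \<le> r" "r < off T (Suc (blk T r))"
proof -
  have Pn: "r < off T (Suc n)" using r unfolding tot_def .
  show b1: "blk T r \<le> n" unfolding blk_def by (rule Least_le) (rule Pn)
  show "r < off T (Suc (blk T r))" unfolding blk_def by (rule LeastI) (rule Pn)
  show "off T (blk T r) \<le> r"
  proof (cases "blk T r")
    case 0 then show ?thesis using off_0 by simp
  next
    case (Suc j)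
    then have "j < blk T r" by simp
    then have "\<not> r < off T (Suc j)" unfolding blk_def by (rule not_less_Least)
    then show ?thesis using Suc by simp
  qed
qed

lemma blk_enc:
  assumes r': "r' < gam T i"
  shows "blk T (off T i + r') = i"
  unfolding blk_def
proof (rule Least_equality)
  show "off T i + r' < off T (Suc i)" using r' off_Suc by simp
next
  fix j assume h: "off T i + r' < off T (Suc j)"
  show "i \<le> j"
  proof (rule ccontr)
    assume "\<not> i \<le> j"
    then have "Suc j \<le> i" by simp
    then have "off T (Suc j) \<le> off T i" by (rule off_mono)
    then show False using h by simp
  qed
qed

lemma enc_lt:
  assumes "i < i'" "r < gam T i"
  shows "off T i + r < off T i'"
proof -
  have "off T i + r < off T (Suc i)" using assms(2) off_Suc by simp
  also have "\<dots> \<le> off T i'" using assms(1) by (intro off_mono) simp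
  finally show ?thesis .
qed

lemma enc_bound:
  assumes "i \<le> n" "r < gam T i"
  shows "off T i + r < tot T"
proof -
  have "off T i + r < off T (Suc i)" using assms(2) off_Suc by simp
  also have "\<dots> \<le> tot T" unfolding tot_def using assms(1) by (intro off_mono) simp
  finally show ?thesis .
qed

lemma dec:
  assumes "r < tot T"
  shows "r = off T (blk T r) + (r - off T (blk T r))" "r - off T (blk T r) < gam T (blk T r)"
  using blk_props[OF assms] off_Suc[of T "blk T r"] by simp_all

lemma gam_split:
  assumes "T \<subseteq> T'" "T' \<subseteq> S"
  shows "gam T' i = gam T i * gam (T' - T) i"
proof -
  have fT': "finite T'" using assms(2) by (rule finT)
  have "T' = T \<union> (T' - T)" using assms(1) by blast
  then have "gam T' i = (\<Prod>s\<in>T \<union> (T' - T). card_fib m f s i)" unfolding gam_def by simp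
  also have "\<dots> = gam T i * gam (T' - T) i" unfolding gam_def
    by (rule prod.union_disjoint) (use fT' assms(1) finite_subset in auto)
  finally show ?thesis .
qed

lemma gam_sub:
  assumes "T \<subseteq> T'" "T' \<subseteq> S" "0 < gam T' i"
  shows "0 < gam T i" "gam T i \<le> gam T' i"
proof -
  have e: "gam T' i = gam T i * gam (T' - T) i" by (rule gam_split[OF assms(1,2)])
  then show "0 < gam T i" using assms(3) by (cases "gam T i") auto
  have "0 < gam (T' - T) i" using e assms(3) by (cases "gam (T' - T) i") auto
  then show "gam T i \<le> gam T' i" using e by simp
qed

lemma gam_insert: "T \<subseteq> S \<Longrightarrow> s \<notin> T \<Longrightarrow> gam (insert s T) i = card_fib m f s i * gam T i"
  unfolding gam_def using finT by simp

lemma gam_empty: "gam {} i = 1" unfolding gam_def by simp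

lemma off_empty: "off {} i = i" unfolding off_def gam_empty by simp

lemma tot_empty: "tot {} = Suc n" unfolding tot_def off_empty ..

lemma Qo_empty: "Qo {} = n" unfolding Qo_def tot_empty by simp

lemma off_single:
  assumes s: "s \<in> S" shows "off {s} i = card {j. j \<le> m s \<and> f s j < i}"
proof (induction i)
  case 0 then show ?case unfolding off_def by simp
next
  case (Suc i)
  have "{j. j \<le> m s \<and> f s j < Suc i} = {j. j \<le> m s \<and> f s j < i} \<union> {j. j \<le> m s \<and> f s j = i}" by auto
  moreover have "card ({j. j \<le> m s \<and> f s j < i} \<union> {j. j \<le> m s \<and> f s j = i}) =
      card {j. j \<le> m s \<and> f s j < i} + card {j. j \<le> m s \<and> f s j = i}"
    by (rule card_Un_disjoint) auto
  ultimately have "card {j. j \<le> m s \<and> f s j < Suc i} = card {j. j \<le> m s \<and> f s j < i} + card_fib m f s i"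
    unfolding card_fib_def by simp
  moreover have "gam {s} i = card_fib m f s i" unfolding gam_def by simp
  ultimately show ?case using Suc off_Suc by simp
qed

lemma tot_single: assumes s: "s \<in> S" shows "tot {s} = Suc (m s)"
proof -
  have "{j. j \<le> m s \<and> f s j < Suc n} = {..m s}" using fs_le[OF s] by (auto simp: less_Suc_eq_le)
  then show ?thesis unfolding tot_def off_single[OF s] by simp
qed

lemma Qo_single: "s \<in> S \<Longrightarrow> Qo {s} = m s" unfolding Qo_def using tot_single by simp

end

context cclaw begin

lemma hm_enc:
  assumes "r < gam T' i"
  shows "hm T T' (off T' i + r) = off T i + min r (gam T i - 1)"
  unfolding hm_def blk_enc[OF assms] by simp

lemma hm_dec:
  assumes "p < tot T'"
  shows "hm T T' p = off T (blk T' p) + min (p - off T' (blk T' p)) (gam T (blk T' p) - 1)"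
  unfolding hm_def ..

lemma hm_lt:
  assumes sub: "T \<subseteq> T'" "T' \<subseteq> S" and p: "p < tot T'"
  shows "hm T T' p < tot T"
proof -
  define i where "i = blk T' p"
  define r where "r = p - off T' i"
  have i: "i \<le> n" and r: "r < gam T' i" using blk_props[OF p] dec[OF p] unfolding i_def r_def by simp_all
  then have "0 < gam T i" using gam_sub[OF sub] by simp
  then have "min r (gam T i - 1) < gam T i" by simp
  then have "off T i + min r (gam T i - 1) < tot T" by (rule enc_bound[OF i])
  then show ?thesis unfolding hm_def i_def[symmetric] r_def[symmetric] .
qed

lemma hm_mono:
  assumes sub: "T \<subseteq> T'" "T' \<subseteq> S" and le: "p1 \<le> p2" and p2: "p2 < tot T'"
  shows "hm T T' p1 \<le> hm T T' p2"
proof -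
  have p1: "p1 < tot T'" using le p2 by simp
  define i1 where "i1 = blk T' p1"
  define r1 where "r1 = p1 - off T' i1"
  define i2 where "i2 = blk T' p2"
  define r2 where "r2 = p2 - off T' i2"
  have d1: "p1 = off T' i1 + r1" "r1 < gam T' i1" using dec[OF p1] unfolding i1_def r1_def by simp_all
  have d2: "p2 = off T' i2 + r2" "r2 < gam T' i2" using dec[OF p2] unfolding i2_def r2_def by simp_all
  have h1: "hm T T' p1 = off T i1 + min r1 (gam T i1 - 1)" unfolding hm_def i1_def r1_def ..
  have h2: "hm T T' p2 = off T i2 + min r2 (gam T i2 - 1)" unfolding hm_def i2_def r2_def ..
  have "i1 \<le> i2"
  proof (rule ccontr)
    assume "\<not> i1 \<le> i2"
    then have "i2 < i1" by simp
    then have "off T' i2 + r2 < off T' i1" by (rule enc_lt[OF _ d2(2)])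
    then show False using d1 d2 le by simp
  qed
  then consider "i1 = i2" | "i1 < i2" by linarith
  then show ?thesis
  proof cases
    case 1
    then have "r1 \<le> r2" using d1 d2 le by simp
    then show ?thesis using h1 h2 1 by simp
  next
    case 2
    have "0 < gam T i1" using gam_sub[OF sub] d1(2) by simp
    then have "min r1 (gam T i1 - 1) < gam T i1" by simp
    then have "off T i1 + min r1 (gam T i1 - 1) < off T i2" by (rule enc_lt[OF 2])
    then show ?thesis using h1 h2 by simp
  qed
qed

lemma hm_dm:
  assumes sub: "T \<subseteq> T'" "T' \<subseteq> S"
  shows "delta_mor (Qo T') (Qo T) (hm T T')"
proof -
  have T: "T \<subseteq> S" using sub by blast
  show ?thesis unfolding delta_mor_def Qo_tot[OF T] Qo_tot[OF sub(2)]
    using hm_lt[OF sub] hm_mono[OF sub] by auto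
qed

lemma hm_id:
  assumes p: "p < tot T" shows "hm T T p = p"
proof -
  have "p - off T (blk T p) < gam T (blk T p)" by (rule dec(2)[OF p])
  then show ?thesis unfolding hm_def using dec(1)[OF p] by simp
qed

lemma hm_comp:
  assumes sub: "T \<subseteq> T'" "T' \<subseteq> T''" "T'' \<subseteq> S" and p: "p < tot T''"
  shows "hm T T'' p = hm T T' (hm T' T'' p)"
proof -
  define i where "i = blk T'' p"
  define r where "r = p - off T'' i"
  have r: "r < gam T'' i" using dec[OF p] unfolding i_def r_def by simp
  have s2: "T' \<subseteq> S" using sub by blast
  have g': "0 < gam T' i" "gam T' i \<le> gam T'' i" using gam_sub[OF sub(2,3)] r by simp_all
  have g: "0 < gam T i" "gam T i \<le> gam T' i" using gam_sub[OF sub(1) s2] g'(1) by simp_all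
  have e1: "hm T' T'' p = off T' i + min r (gam T' i - 1)" unfolding hm_def i_def r_def ..
  have m1: "min r (gam T' i - 1) < gam T' i" using g' by simp
  have "hm T T' (hm T' T'' p) = off T i + min (min r (gam T' i - 1)) (gam T i - 1)"
    unfolding e1 by (rule hm_enc[OF m1])
  also have "\<dots> = off T i + min r (gam T i - 1)" using g by simp
  also have "\<dots> = hm T T'' p" unfolding hm_def i_def r_def ..
  finally show ?thesis by simp
qed

lemma blk_single:
  assumes s: "s \<in> S" and r: "r \<le> m s"
  shows "blk {s} r = f s r"
  unfolding blk_def
proof (rule Least_equality)
  have "{..r} \<subseteq> {j. j \<le> m s \<and> f s j < Suc (f s r)}"
    using fs_mono[OF s] r by (auto simp: less_Suc_eq_le)
  then have "card {..r} \<le> card {j. j \<le> m s \<and> f s j < Suc (f s r)}"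
    by (intro card_mono) auto
  then show "r < off {s} (Suc (f s r))" unfolding off_single[OF s] by simp
next
  fix j assume h: "r < off {s} (Suc j)"
  show "f s r \<le> j"
  proof (rule ccontr)
    assume "\<not> f s r \<le> j"
    then have "{j'. j' \<le> m s \<and> f s j' < Suc j} \<subseteq> {..<r}"
      using fs_mono[OF s] by (auto simp: less_Suc_eq_le) (metis le_trans not_le)
    then have "card {j'. j' \<le> m s \<and> f s j' < Suc j} \<le> card {..<r}"
      by (intro card_mono) auto
    then show False using h unfolding off_single[OF s] by simp
  qed
qed

lemma hm_single:
  assumes s: "s \<in> S" and r: "r \<le> m s"
  shows "hm {} {s} r = f s r"
  unfolding hm_def blk_single[OF s r] off_empty gam_empty by simp

lemma Qm_hom: "T \<subseteq> T' \<Longrightarrow> T' \<subseteq> S \<Longrightarrow> Qm T T' \<in> lam_hom (Qo T') (Qo T)"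
  unfolding Qm_def by (rule d2l_lam[OF hm_dm])

lemma Qm_id: assumes T: "T \<subseteq> S" shows "Qm T T = id"
proof -
  have "Qm T T = delta_to_lambda (Qo T) (Qo T) (\<lambda>r. r)"
    unfolding Qm_def by (rule d2l_cong) (simp add: Qo_tot[OF T] hm_id)
  then show ?thesis using d2l_id by simp
qed

lemma Qm_comp:
  assumes sub: "T \<subseteq> T'" "T' \<subseteq> T''" "T'' \<subseteq> S"
  shows "Qm T T'' = lam_comp (Qo T) (Qm T T') (Qm T' T'')"
proof -
  have s2: "T' \<subseteq> S" using sub by blast
  have "lam_comp (Qo T) (Qm T T') (Qm T' T'') = delta_to_lambda (Qo T'') (Qo T) (hm T T' \<circ> hm T' T'')"
    unfolding Qm_def by (rule lam_comp_d2l[OF hm_dm[OF sub(2,3)] hm_dm[OF sub(1) s2]])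
  also have "\<dots> = Qm T T''" unfolding Qm_def
    by (rule d2l_cong) (simp add: Qo_tot[OF sub(3)] hm_comp[OF sub])
  finally show ?thesis by simp
qed

lemma cube: "lam_cube S Qo Qm"
  unfolding lam_cube_def
proof (intro conjI allI impI)
  fix T T' assume "T \<subseteq> T' \<and> T' \<subseteq> S"
  then show "Qm T T' \<in> lam_hom (Qo T') (Qo T)" using Qm_hom by blast
next
  fix T assume "T \<subseteq> S" then show "Qm T T = id" by (rule Qm_id)
next
  fix T T' T'' assume "T \<subseteq> T' \<and> T' \<subseteq> T'' \<and> T'' \<subseteq> S"
  then show "Qm T T'' = lam_comp (Qo T) (Qm T T') (Qm T' T'')" using Qm_comp by blast
qed

lemma ext: "extends_claw S n m f Qo Qm"
  unfolding extends_claw_def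
proof (intro conjI ballI cube Qo_empty)
  fix s assume s: "s \<in> S"
  show "Qo {s} = m s" by (rule Qo_single[OF s])
  show "Qm {} {s} = delta_to_lambda (m s) n (f s)"
    unfolding Qm_def Qo_single[OF s] Qo_empty by (rule d2l_cong) (simp add: hm_single[OF s])
qed

end

context cclaw begin

lemma triple:
  assumes T: "T \<subseteq> S" and s: "s \<in> S" "s \<notin> T" and s': "s' \<in> S" "s' \<notin> T" and ne: "s \<noteq> s'"
    and i: "i \<le> n"
  shows "(card_fib m f s i = 1 \<and> card_fib m f s' i = 1) \<or> (gam T i = 1 \<and> card_fib m f s' i = 1)
       \<or> (gam T i = 1 \<and> card_fib m f s i = 1)"
proof -
  have p0: "card_fib m f s i = 1 \<or> card_fib m f s' i = 1" using pc s s' ne i unfolding PC_def by blast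
  show ?thesis
  proof (cases "gam T i = 1")
    case True then show ?thesis using p0 by blast
  next
    case False
    have "\<exists>t\<in>T. card_fib m f t i \<noteq> 1"
    proof (rule ccontr)
      assume "\<not> (\<exists>t\<in>T. card_fib m f t i \<noteq> 1)"
      then have "gam T i = 1" unfolding gam_def by simp
      then show False using False by simp
    qed
    then obtain t where t: "t \<in> T" "card_fib m f t i \<noteq> 1" by blast
    have ts: "t \<noteq> s" "t \<noteq> s'" using t s s' by auto
    have tS: "t \<in> S" using t T by blast
    have "PC n m f t s" using pc tS s(1) ts(1) by blast
    then have c1: "card_fib m f s i = 1" using t(2) i unfolding PC_def by blast
    have "PC n m f t s'" using pc tS s'(1) ts(2) by blast
    then have c2: "card_fib m f s' i = 1" using t(2) i unfolding PC_def by blast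
    note c1 c2
    then show ?thesis by blast
  qed
qed

lemma blk_hm:
  assumes sub: "T \<subseteq> T'" "T' \<subseteq> S" and p: "p < tot T'"
  shows "blk T (hm T T' p) = blk T' p"
proof -
  define i where "i = blk T' p"
  define r where "r = p - off T' i"
  have r: "r < gam T' i" using dec[OF p] unfolding i_def r_def by simp
  then have "0 < gam T i" using gam_sub[OF sub] by simp
  then have "min r (gam T i - 1) < gam T i" by simp
  then have b: "blk T (off T i + min r (gam T i - 1)) = i" by (rule blk_enc)
  have "hm T T' p = off T i + min r (gam T i - 1)" unfolding hm_def i_def r_def ..
  then show ?thesis using b unfolding i_def by simp
qed

lemma face_nat:
  assumes T: "T \<subseteq> S" and s: "s \<in> S" "s \<notin> T" and s': "s' \<in> S" "s' \<notin> T" and ne: "s \<noteq> s'"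
  defines "U \<equiv> insert s (insert s' T)"
  shows "\<And>p. p < tot U \<Longrightarrow> hm T (insert s T) (hm (insert s T) U p) = hm T (insert s' T) (hm (insert s' T) U p)"
    and "\<And>k k'. k < tot (insert s T) \<Longrightarrow> k' < tot (insert s' T) \<Longrightarrow>
           hm T (insert s T) k = hm T (insert s' T) k' \<Longrightarrow>
           \<exists>p. p < tot U \<and> hm (insert s T) U p = k \<and> hm (insert s' T) U p = k'"
    and "\<And>p p'. p < tot U \<Longrightarrow> p' < tot U \<Longrightarrow> hm (insert s T) U p = hm (insert s T) U p' \<Longrightarrow>
           hm (insert s' T) U p = hm (insert s' T) U p' \<Longrightarrow> p = p'"
proof -
  have US: "U \<subseteq> S" unfolding U_def using T s s' by blast
  have sub1: "T \<subseteq> insert s T" "insert s T \<subseteq> U" "insert s T \<subseteq> S" unfolding U_def using T s by auto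
  have sub2: "T \<subseteq> insert s' T" "insert s' T \<subseteq> U" "insert s' T \<subseteq> S" unfolding U_def using T s' by auto
  have gs: "gam (insert s T) i = card_fib m f s i * gam T i" for i by (rule gam_insert[OF T s(2)])
  have gs': "gam (insert s' T) i = card_fib m f s' i * gam T i" for i by (rule gam_insert[OF T s'(2)])
  have gU: "gam U i = card_fib m f s i * (card_fib m f s' i * gam T i)" for i
  proof -
    have "insert s' T \<subseteq> S" "s \<notin> insert s' T" using s s' ne T by auto
    then have "gam U i = card_fib m f s i * gam (insert s' T) i" unfolding U_def by (rule gam_insert)
    then show ?thesis using gs' by simp
  qed
  show "hm T (insert s T) (hm (insert s T) U p) = hm T (insert s' T) (hm (insert s' T) U p)"
    if p: "p < tot U" for p
    using hm_comp[OF sub1(1,2) US p] hm_comp[OF sub2(1,2) US p] by simp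
  show "\<exists>p. p < tot U \<and> hm (insert s T) U p = k \<and> hm (insert s' T) U p = k'"
    if k: "k < tot (insert s T)" and k': "k' < tot (insert s' T)"
      and e: "hm T (insert s T) k = hm T (insert s' T) k'" for k k'
  proof -
    define i1 where "i1 = blk (insert s T) k"
    define r1 where "r1 = k - off (insert s T) i1"
    define i2 where "i2 = blk (insert s' T) k'"
    define r2 where "r2 = k' - off (insert s' T) i2"
    have d1: "k = off (insert s T) i1 + r1" "r1 < gam (insert s T) i1" "i1 \<le> n"
      using dec[OF k] blk_props[OF k] unfolding i1_def r1_def by simp_all
    have d2: "k' = off (insert s' T) i2 + r2" "r2 < gam (insert s' T) i2" "i2 \<le> n"
      using dec[OF k'] blk_props[OF k'] unfolding i2_def r2_def by simp_all
    have "blk T (hm T (insert s T) k) = i1" using blk_hm[OF sub1(1,3) k] unfolding i1_def .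
    moreover have "blk T (hm T (insert s' T) k') = i2" using blk_hm[OF sub2(1,3) k'] unfolding i2_def .
    ultimately have ii: "i1 = i2" using e by simp
    define i where "i = i1"
    have h1: "hm T (insert s T) k = off T i + min r1 (gam T i - 1)" unfolding hm_def i_def i1_def r1_def ..
    have h2: "hm T (insert s' T) k' = off T i + min r2 (gam T i - 1)" unfolding hm_def i_def ii i2_def r2_def ..
    have mm: "min r1 (gam T i - 1) = min r2 (gam T i - 1)" using e h1 h2 by simp
    define x where "x = gam T i"
    define y where "y = card_fib m f s i"
    define z where "z = card_fib m f s' i"
    have r1b: "r1 < y * x" using d1(2) gs unfolding i_def x_def y_def by simp
    have r2b: "r2 < z * x" using d2(2) gs' ii unfolding i_def x_def z_def by simp
    have tr: "(y = 1 \<and> z = 1) \<or> (x = 1 \<and> z = 1) \<or> (x = 1 \<and> y = 1)"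
      using triple[OF T s s' ne d1(3)] unfolding x_def y_def z_def i_def by blast
    define r where "r = max r1 r2"
    have rr: "r < y * (z * x) \<and> min r (y * x - 1) = r1 \<and> min r (z * x - 1) = r2"
      using tr
    proof (elim disjE conjE)
      assume "y = 1" "z = 1"
      then have "r1 = r2" using mm r1b r2b unfolding x_def by simp
      then show ?thesis unfolding r_def using r1b r2b \<open>y = 1\<close> \<open>z = 1\<close> by simp
    next
      assume "x = 1" "z = 1"
      then have "r2 = 0" using r2b by simp
      then show ?thesis unfolding r_def using r1b \<open>x = 1\<close> \<open>z = 1\<close> by simp
    next
      assume "x = 1" "y = 1"
      then have "r1 = 0" using r1b by simp
      then show ?thesis unfolding r_def using r2b \<open>x = 1\<close> \<open>y = 1\<close> by simp
    qed
    have rU: "r < gam U i" using rr gU unfolding x_def y_def z_def by simp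
    define p where "p = off U i + r"
    have pt: "p < tot U" unfolding p_def by (rule enc_bound[OF _ rU]) (use d1(3) i_def in simp)
    have "hm (insert s T) U p = off (insert s T) i + min r (gam (insert s T) i - 1)"
      unfolding p_def by (rule hm_enc[OF rU])
    also have "\<dots> = k" using rr d1(1) gs unfolding i_def x_def y_def by simp
    finally have A: "hm (insert s T) U p = k" .
    have "hm (insert s' T) U p = off (insert s' T) i + min r (gam (insert s' T) i - 1)"
      unfolding p_def by (rule hm_enc[OF rU])
    also have "\<dots> = k'" using rr d2(1) gs' ii unfolding i_def x_def z_def by simp
    finally have B: "hm (insert s' T) U p = k'" .
    show ?thesis using pt A B by blast
  qed
  show "p = p'" if p: "p < tot U" and p': "p' < tot U"
    and e1: "hm (insert s T) U p = hm (insert s T) U p'"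
    and e2: "hm (insert s' T) U p = hm (insert s' T) U p'" for p p'
  proof -
    define i where "i = blk U p"
    define r where "r = p - off U i"
    define i' where "i' = blk U p'"
    define r' where "r' = p' - off U i'"
    have d: "p = off U i + r" "r < gam U i" "i \<le> n" using dec[OF p] blk_props[OF p] unfolding i_def r_def by simp_all
    have d': "p' = off U i' + r'" "r' < gam U i'" using dec[OF p'] unfolding i'_def r'_def by simp_all
    have "blk (insert s T) (hm (insert s T) U p) = i" using blk_hm[OF sub1(2) US p] unfolding i_def .
    moreover have "blk (insert s T) (hm (insert s T) U p') = i'" using blk_hm[OF sub1(2) US p'] unfolding i'_def .
    ultimately have ii: "i = i'" using e1 by simp
    have a1: "min r (gam (insert s T) i - 1) = min r' (gam (insert s T) i - 1)"
      using e1 hm_enc[OF d(2)] hm_enc[OF d'(2)] d(1) d'(1) ii by simp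
    have a2: "min r (gam (insert s' T) i - 1) = min r' (gam (insert s' T) i - 1)"
      using e2 hm_enc[OF d(2)] hm_enc[OF d'(2)] d(1) d'(1) ii by simp
    define x where "x = gam T i"
    define y where "y = card_fib m f s i"
    define z where "z = card_fib m f s' i"
    have tr: "(y = 1 \<and> z = 1) \<or> (x = 1 \<and> z = 1) \<or> (x = 1 \<and> y = 1)"
      using triple[OF T s s' ne d(3)] unfolding x_def y_def z_def by blast
    have rb: "r < y * (z * x)" "r' < y * (z * x)" using d(2) d'(2) gU ii unfolding x_def y_def z_def by simp_all
    have b1: "min r (y * x - 1) = min r' (y * x - 1)" using a1 gs unfolding x_def y_def by simp
    have b2: "min r (z * x - 1) = min r' (z * x - 1)" using a2 gs' unfolding x_def z_def by simp
    have "r = r'"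
    proof (cases "y = 1")
      case True
      then show ?thesis using b2 rb by simp
    next
      case False
      then have "z = 1" using tr by blast
      then show ?thesis using b1 rb by simp
    qed
    then show ?thesis using d(1) d'(1) ii by simp
  qed
qed

lemma face_pullback:
  assumes T: "T \<subseteq> S" and s: "s \<in> S" "s \<notin> T" and s': "s' \<in> S" "s' \<notin> T" and ne: "s \<noteq> s'"
  shows "lam_pullback (Qo (insert s (insert s' T))) (Qo (insert s T)) (Qo (insert s' T)) (Qo T)
          (Qm (insert s T) (insert s (insert s' T))) (Qm (insert s' T) (insert s (insert s' T)))
          (Qm T (insert s T)) (Qm T (insert s' T))"
proof -
  define U where "U = insert s (insert s' T)"
  have US: "U \<subseteq> S" unfolding U_def using T s s' by blast
  have sub1: "T \<subseteq> insert s T" "insert s T \<subseteq> U" "insert s T \<subseteq> S" unfolding U_def using T s by auto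
  have sub2: "T \<subseteq> insert s' T" "insert s' T \<subseteq> U" "insert s' T \<subseteq> S" unfolding U_def using T s' by auto
  have dpa: "delta_mor (Qo U) (Qo (insert s T)) (hm (insert s T) U)" by (rule hm_dm[OF sub1(2) US])
  have dpb: "delta_mor (Qo U) (Qo (insert s' T)) (hm (insert s' T) U)" by (rule hm_dm[OF sub2(2) US])
  have dha: "delta_mor (Qo (insert s T)) (Qo T) (hm T (insert s T))" by (rule hm_dm[OF sub1(1,3)])
  have dhb: "delta_mor (Qo (insert s' T)) (Qo T) (hm T (insert s' T))" by (rule hm_dm[OF sub2(1,3)])
  note FN = face_nat[OF T s s' ne, folded U_def]
  have H: "PHI (Qm (insert s T) U) (Qm (insert s' T) U) (Qm T (insert s T)) (Qm T (insert s' T))"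
    unfolding Qm_def
  proof (rule PHI_d2l[OF dpa dpb dha dhb])
    fix p assume "p \<le> Qo U"
    then show "hm T (insert s T) (hm (insert s T) U p) = hm T (insert s' T) (hm (insert s' T) U p)"
      using FN(1) Qo_tot[OF US] by blast
  next
    fix k k' assume "k \<le> Qo (insert s T)" "k' \<le> Qo (insert s' T)"
      "hm T (insert s T) k = hm T (insert s' T) k'"
    then show "\<exists>p\<le>Qo U. hm (insert s T) U p = k \<and> hm (insert s' T) U p = k'"
      using FN(2) Qo_tot[OF US] Qo_tot[OF sub1(3)] Qo_tot[OF sub2(3)] by blast
  next
    fix p p' assume "p \<le> Qo U" "p' \<le> Qo U" "hm (insert s T) U p = hm (insert s T) U p'"
      "hm (insert s' T) U p = hm (insert s' T) U p'"
    then show "p = p'" using FN(3) Qo_tot[OF US] by blast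
  qed
  have hpa: "Qm (insert s T) U \<in> lam_hom (Qo U) (Qo (insert s T))" by (rule Qm_hom[OF sub1(2) US])
  have hpb: "Qm (insert s' T) U \<in> lam_hom (Qo U) (Qo (insert s' T))" by (rule Qm_hom[OF sub2(2) US])
  have hga: "Qm T (insert s T) \<in> lam_hom (Qo (insert s T)) (Qo T)" by (rule Qm_hom[OF sub1(1,3)])
  have hgb: "Qm T (insert s' T) \<in> lam_hom (Qo (insert s' T)) (Qo T)" by (rule Qm_hom[OF sub2(1,3)])
  have E: "Qm T (insert s T) \<circ> Qm (insert s T) U = Qm T (insert s' T) \<circ> sh (Qo (insert s' T)) 0 (Qm (insert s' T) U)"
    using H unfolding PHI_def by simp
  have Z: "ZPB (Qo U) (Qo (insert s T)) (Qo (insert s' T)) (Qo T) (Qm (insert s T) U)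
      (sh (Qo (insert s' T)) 0 (Qm (insert s' T) U)) (Qm T (insert s T)) (Qm T (insert s' T))"
    using ZPB_of_PHI[OF lam_emap[OF hpa] lam_emap[OF hpb] lam_emap[OF hga] lam_emap[OF hgb] H] by simp
  show ?thesis using R2[OF hpa hpb hga hgb E Z] unfolding U_def .
qed

lemma cart: "strongly_cartesian S Qo Qm"
  unfolding strongly_cartesian_def using face_pullback by blast

end

theorem proposition4p2p4:
  fixes S :: "'s set" and n :: nat and m :: "'s \<Rightarrow> nat" and f :: "'s \<Rightarrow> nat \<Rightarrow> nat"
  assumes "finite S"
    and "\<forall>s\<in>S. delta_mor (m s) n (f s)"
  shows "((\<exists>Qo Qm. extends_claw S n m f Qo Qm \<and> strongly_cartesian S Qo Qm) \<and>
          (\<forall>Qo Qm. extends_claw S n m f Qo Qm \<and> strongly_cartesian S Qo Qm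
                    \<longrightarrow> strongly_cocartesian S Qo Qm))
         \<longleftrightarrow> cyclically_compatible S n m f"
proof
  assume L: "(\<exists>Qo Qm. extends_claw S n m f Qo Qm \<and> strongly_cartesian S Qo Qm) \<and>
          (\<forall>Qo Qm. extends_claw S n m f Qo Qm \<and> strongly_cartesian S Qo Qm
                    \<longrightarrow> strongly_cocartesian S Qo Qm)"
  then obtain Q1 Q2 where e: "extends_claw S n m f Q1 Q2" and c: "strongly_cartesian S Q1 Q2" by blast
  have co: "strongly_cocartesian S Q1 Q2" using L e c by blast
  show "cyclically_compatible S n m f" by (rule forward_dir[OF assms(1) assms(2) e c co])
next
  assume cyc: "cyclically_compatible S n m f"
  have pcs: "\<forall>s\<in>S. \<forall>s'\<in>S. s \<noteq> s' \<longrightarrow> PC n m f s s'" using cyc cyc_iff_PC[OF assms(1)] by blast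
  have cl: "cclaw S n m f" using assms(1,2) pcs by (rule cclaw.intro)
  have ex: "\<exists>Q1 Q2. extends_claw S n m f Q1 Q2 \<and> strongly_cartesian S Q1 Q2"
    using cclaw.ext[OF cl] cclaw.cart[OF cl] by blast
  have all: "\<forall>Q1 Q2. extends_claw S n m f Q1 Q2 \<and> strongly_cartesian S Q1 Q2
                    \<longrightarrow> strongly_cocartesian S Q1 Q2"
  proof (intro allI impI)
    fix Q1 Q2 assume h: "extends_claw S n m f Q1 Q2 \<and> strongly_cartesian S Q1 Q2"
    have b: "\<And>s s'. s \<in> S \<Longrightarrow> s' \<in> S \<Longrightarrow> s \<noteq> s' \<Longrightarrow> ZC (Q2 {} {s}) (Q2 {} {s'})"
      by (rule base_ZC[OF _ assms(2) pcs]) (use h in blast)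
    have sc: "strongly_cartesian S Q1 Q2" using h by blast
    show "strongly_cocartesian S Q1 Q2" by (rule cube_cocart[of S Q1 Q2, OF assms(1) sc b])
  qed
  show "(\<exists>Qo Qm. extends_claw S n m f Qo Qm \<and> strongly_cartesian S Qo Qm) \<and>
          (\<forall>Qo Qm. extends_claw S n m f Qo Qm \<and> strongly_cartesian S Qo Qm
                    \<longrightarrow> strongly_cocartesian S Qo Qm)" using ex all by blast
qed

end
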